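(* Let $G$ and $H$ be graphs, each with at least $2$ vertices. The strong product $G\boxtimes H$ is $1$-perfectly orientable if and only if one of the following holds: (i) every connected component of $G$ is complete and $H$ is $1$-perfectly orientable, or vice versa; (ii) every connected component of $G$ is $2$-complete and every connected component of $H$ is a co-chain graph, or vice versa.
   Context: All graphs are finite and simple. An orientation of a graph $G$ is $1$-perfect if the out-neighborhood of every vertex induces a clique in $G$; $G$ is $1$-perfectly orientable if it admits a $1$-perfect orientation. The strong product $G\boxtimes H$ has vertex set $V(G)\times V(H)$, with distinct $(u,v),(u',v')$ adjacent iff $u'\in N_G[u]$ and $v'\in N_H[v]$ (closed neighborhoods). A graph is $2$-complete if it is the union of two (not necessarily distinct) complete graphs sharing at least one vertex (equivalently, it is obtained from $K_1$ or $P_3$ by repeatedly adding true twins, where adding a true twin to $x$ means adding a new vertex adjacent to $x$ and to all neighbors of $x$). A graph $G$ is a co-chain graph if its vertex set can be partitioned into two cliques $X$ and $Y$ such that the vertices of $X$ can be ordered $x_1,\dots,x_{|X|}$ with $N[x_i]\subseteq N[x_j]$ for all $1\le i<j\le |X|$. *)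

theory Defs
  imports Main
begin

definition graph :: "'a set \<Rightarrow> ('a \<times> 'a) set \<Rightarrow> bool" where
  "graph V E \<longleftrightarrow> finite V \<and> E \<subseteq> V \<times> V \<and> sym E \<and> (\<forall>x. (x, x) \<notin> E)"

definition clique :: "('a \<times> 'a) set \<Rightarrow> 'a set \<Rightarrow> bool" where
  "clique E K \<longleftrightarrow> (\<forall>x\<in>K. \<forall>y\<in>K. x \<noteq> y \<longrightarrow> (x, y) \<in> E)"

definition complete_graph :: "'a set \<Rightarrow> ('a \<times> 'a) set \<Rightarrow> bool" where
  "complete_graph V E \<longleftrightarrow> clique E V"

definition orientation :: "('a \<times> 'a) set \<Rightarrow> ('a \<times> 'a) set \<Rightarrow> bool" where
  "orientation E D \<longleftrightarrow> D \<subseteq> E \<and> (\<forall>u v. (u, v) \<in> E \<longrightarrow> (u, v) \<in> D \<or> (v, u) \<in> D)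
      \<and> (\<forall>u v. (u, v) \<in> D \<longrightarrow> (v, u) \<notin> D)"

definition one_perfect_orientation :: "'a set \<Rightarrow> ('a \<times> 'a) set \<Rightarrow> ('a \<times> 'a) set \<Rightarrow> bool" where
  "one_perfect_orientation V E D \<longleftrightarrow> orientation E D \<and> (\<forall>v\<in>V. clique E {w. (v, w) \<in> D})"

definition one_perfectly_orientable :: "'a set \<Rightarrow> ('a \<times> 'a) set \<Rightarrow> bool" where
  "one_perfectly_orientable V E \<longleftrightarrow> (\<exists>D. one_perfect_orientation V E D)"

definition strong_product_edges ::
  "'a set \<Rightarrow> ('a \<times> 'a) set \<Rightarrow> 'b set \<Rightarrow> ('b \<times> 'b) set \<Rightarrow> (('a \<times> 'b) \<times> ('a \<times> 'b)) set" where
  "strong_product_edges V1 E1 V2 E2 =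
     {((u, v), (u', v')). u \<in> V1 \<and> u' \<in> V1 \<and> v \<in> V2 \<and> v' \<in> V2 \<and> (u, v) \<noteq> (u', v')
        \<and> (u' = u \<or> (u, u') \<in> E1) \<and> (v' = v \<or> (v, v') \<in> E2)}"

definition induced_edges :: "('a \<times> 'a) set \<Rightarrow> 'a set \<Rightarrow> ('a \<times> 'a) set" where
  "induced_edges E C = E \<inter> (C \<times> C)"

definition components :: "'a set \<Rightarrow> ('a \<times> 'a) set \<Rightarrow> 'a set set" where
  "components V E = {{y \<in> V. (x, y) \<in> E\<^sup>*} | x. x \<in> V}"

definition two_complete :: "'a set \<Rightarrow> ('a \<times> 'a) set \<Rightarrow> bool" where
  "two_complete V E \<longleftrightarrow> (\<exists>A B. A \<union> B = V \<and> A \<inter> B \<noteq> {} \<and>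
      (\<forall>x y. (x, y) \<in> E \<longleftrightarrow> x \<noteq> y \<and> ((x \<in> A \<and> y \<in> A) \<or> (x \<in> B \<and> y \<in> B))))"

definition closed_nbhd :: "('a \<times> 'a) set \<Rightarrow> 'a \<Rightarrow> 'a set" where
  "closed_nbhd E x = insert x {y. (x, y) \<in> E}"

definition co_chain :: "'a set \<Rightarrow> ('a \<times> 'a) set \<Rightarrow> bool" where
  "co_chain V E \<longleftrightarrow> (\<exists>X Y xs. X \<union> Y = V \<and> X \<inter> Y = {} \<and> clique E X \<and> clique E Y \<and>
      distinct xs \<and> set xs = X \<and>
      (\<forall>i j. i < j \<and> j < length xs \<longrightarrow> closed_nbhd E (xs ! i) \<subseteq> closed_nbhd E (xs ! j)))"

end

theory Submission
  imports Defs
begin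

abbreviation "spe \<equiv> strong_product_edges"

lemma spe_iff:
  "((u,v),(u',v')) \<in> spe V1 E1 V2 E2 \<longleftrightarrow> u \<in> V1 \<and> u' \<in> V1 \<and> v \<in> V2 \<and> v' \<in> V2 \<and> (u,v) \<noteq> (u',v')
        \<and> (u' = u \<or> (u, u') \<in> E1) \<and> (v' = v \<or> (v, v') \<in> E2)"
  by (simp add: strong_product_edges_def)

lemma spe_sub: "spe V1 E1 V2 E2 \<subseteq> (V1 \<times> V2) \<times> (V1 \<times> V2)"
  by (auto simp: strong_product_edges_def)

lemma cover_opo:
  assumes fin: "finite V" and sub: "E \<subseteq> V \<times> V" and irr: "\<forall>x. (x,x) \<notin> E" and sy: "sym E"
    and cl: "\<forall>w\<in>V. \<forall>a\<in>C w. \<forall>b\<in>C w. a \<noteq> b \<longrightarrow> (a,b) \<in> E"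
    and tot: "\<forall>w w'. (w,w') \<in> E \<longrightarrow> w' \<in> C w \<or> w \<in> C w'"
  shows "one_perfectly_orientable V E"
proof -
  obtain f :: "_ \<Rightarrow> nat" and n where f: "inj_on f V"
    using finite_imp_inj_to_nat_seg[OF fin] by blast
  define D where "D = {(w,w'). (w,w') \<in> E \<and> w' \<in> C w \<and> (w \<in> C w' \<longrightarrow> f w < f w')}"
  have "orientation E D"
    unfolding orientation_def
  proof (intro conjI allI impI)
    show "D \<subseteq> E" by (auto simp: D_def)
  next
    fix u v assume uv: "(u,v) \<in> E"
    then have "u \<noteq> v" using irr by auto
    moreover have "u \<in> V" "v \<in> V" using uv sub by auto
    ultimately have "f u \<noteq> f v" using f by (auto dest: inj_onD)
    then show "(u,v) \<in> D \<or> (v,u) \<in> D" using uv tot sub sy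
      by (cases "f u < f v") (auto simp: D_def dest: symD)
  next
    fix u v assume "(u,v) \<in> D" then show "(v,u) \<notin> D" by (auto simp: D_def)
  qed
  moreover have "\<forall>v\<in>V. clique E {w. (v, w) \<in> D}"
    using cl unfolding clique_def D_def by blast
  ultimately show ?thesis unfolding one_perfectly_orientable_def one_perfect_orientation_def by blast
qed


lemma graphD: assumes "graph V E"
  shows "finite V" "E \<subseteq> V \<times> V" "sym E" "\<And>x. (x,x) \<notin> E"
    "\<And>x y. (x,y) \<in> E \<Longrightarrow> (y,x) \<in> E" "\<And>x y. (x,y) \<in> E \<Longrightarrow> x \<in> V" "\<And>x y. (x,y) \<in> E \<Longrightarrow> y \<in> V"
  using assms unfolding graph_def by (auto dest: symD)

lemma rtrancl_sym: "sym E \<Longrightarrow> (x,y) \<in> E\<^sup>* \<Longrightarrow> (y,x) \<in> E\<^sup>*"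
  by (metis converse_iff rtrancl_converse sym_conv_converse_eq)

lemma comp_of: "x \<in> V \<Longrightarrow> {y \<in> V. (x, y) \<in> E\<^sup>*} \<in> components V E"
  unfolding components_def by blast

lemma comps_complete_D:
  assumes g: "graph V E" and c: "\<forall>C\<in>components V E. complete_graph C (induced_edges E C)"
    and "(u,v) \<in> E\<^sup>*" "u \<in> V" "v \<in> V" "u \<noteq> v"
  shows "(u,v) \<in> E"
proof -
  have "complete_graph {y \<in> V. (u, y) \<in> E\<^sup>*} (induced_edges E {y \<in> V. (u, y) \<in> E\<^sup>*})"
    using c comp_of[OF assms(4)] by blast
  then show ?thesis using assms unfolding complete_graph_def clique_def induced_edges_def by auto
qed

lemma comps_complete_nb:
  assumes g: "graph V E" and c: "\<forall>C\<in>components V E. complete_graph C (induced_edges E C)"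
    and "g1 \<in> closed_nbhd E g" "g2 \<in> closed_nbhd E g" "g \<in> V" "g1 \<noteq> g2"
  shows "(g1,g2) \<in> E"
proof -
  have "(g1,g2) \<in> E\<^sup>*"
  proof -
    have "(g1,g) \<in> E\<^sup>*" using assms(3) graphD(5)[OF g] unfolding closed_nbhd_def by auto
    moreover have "(g,g2) \<in> E\<^sup>*" using assms(4) unfolding closed_nbhd_def by auto
    ultimately show ?thesis by (rule rtrancl_trans)
  qed
  moreover have "g1 \<in> V" "g2 \<in> V" using assms(3,4,5) graphD[OF g] unfolding closed_nbhd_def by auto
  ultimately show ?thesis using comps_complete_D[OF g c] assms(6) by blast
qed

lemma opoD:
  assumes "one_perfect_orientation V E D"
  shows "D \<subseteq> E" "\<And>u v. (u,v) \<in> E \<Longrightarrow> (u,v) \<in> D \<or> (v,u) \<in> D"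
    "\<And>u v. (u,v) \<in> D \<Longrightarrow> (v,u) \<notin> D"
    "\<And>v a b. v \<in> V \<Longrightarrow> (v,a) \<in> D \<Longrightarrow> (v,b) \<in> D \<Longrightarrow> a \<noteq> b \<Longrightarrow> (a,b) \<in> E"
  using assms unfolding one_perfect_orientation_def orientation_def clique_def by blast+

lemma back_i:
  assumes g: "graph VG EG" and h: "graph VH EH"
    and c: "\<forall>C\<in>components VG EG. complete_graph C (induced_edges EG C)"
    and o: "one_perfectly_orientable VH EH"
  shows "one_perfectly_orientable (VG \<times> VH) (spe VG EG VH EH)"
proof -
  obtain DH where DH: "one_perfect_orientation VH EH DH" using o unfolding one_perfectly_orientable_def by blast
  note DHD = opoD[OF DH]
  note gG = graphD[OF g] and gH = graphD[OF h]
  define C where "C = (\<lambda>(g::'a,h::'b). closed_nbhd EG g \<times> insert h {h'. (h,h') \<in> DH})"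
  show ?thesis
  proof (rule cover_opo[where C = C])
    show "finite (VG \<times> VH)" using gG gH by auto
    show "spe VG EG VH EH \<subseteq> (VG \<times> VH) \<times> VG \<times> VH" by (rule spe_sub)
    show "\<forall>x. (x, x) \<notin> spe VG EG VH EH" by (auto simp: strong_product_edges_def)
    show "sym (spe VG EG VH EH)" using gG gH unfolding sym_def strong_product_edges_def by auto
    show "\<forall>w\<in>VG \<times> VH. \<forall>a\<in>C w. \<forall>b\<in>C w. a \<noteq> b \<longrightarrow> (a, b) \<in> spe VG EG VH EH"
    proof (intro ballI impI)
      fix w a b assume w: "w \<in> VG \<times> VH" and a: "a \<in> C w" and b: "b \<in> C w" and ab: "a \<noteq> b"
      obtain g0 h0 where w0: "w = (g0,h0)" by (cases w)
      obtain g1 h1 where a0: "a = (g1,h1)" by (cases a)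
      obtain g2 h2 where b0: "b = (g2,h2)" by (cases b)
      have g12: "g1 \<in> closed_nbhd EG g0" "g2 \<in> closed_nbhd EG g0" using a b by (auto simp: C_def w0 a0 b0)
      have gV: "g1 \<in> VG" "g2 \<in> VG" using g12 w gG unfolding closed_nbhd_def w0 by auto
      have gg: "g1 = g2 \<or> (g1,g2) \<in> EG" using comps_complete_nb[OF g c g12] w w0 by auto
      have h12: "h1 \<in> insert h0 {h'. (h0,h') \<in> DH}" "h2 \<in> insert h0 {h'. (h0,h') \<in> DH}"
        using a b by (auto simp: C_def w0 a0 b0)
      have hV: "h1 \<in> VH" "h2 \<in> VH" using h12 w DHD(1) gH unfolding w0 by auto
      have hh: "h1 = h2 \<or> (h1,h2) \<in> EH"
        using h12 DHD(1) DHD(4)[of h0 h1 h2] w w0 gH by auto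
      show "(a, b) \<in> spe VG EG VH EH" using gV hV gg hh ab gG gH
        unfolding a0 b0 spe_iff by auto
    qed
    show "\<forall>w w'. (w, w') \<in> spe VG EG VH EH \<longrightarrow> w' \<in> C w \<or> w \<in> C w'"
    proof (intro allI impI)
      fix w w' assume e: "(w, w') \<in> spe VG EG VH EH"
      obtain g0 h0 where w0: "w = (g0,h0)" by (cases w)
      obtain g1 h1 where a0: "w' = (g1,h1)" by (cases w')
      show "w' \<in> C w \<or> w \<in> C w'" using e DHD(2)[of h0 h1] gG gH
        unfolding w0 a0 spe_iff C_def closed_nbhd_def by auto
    qed
  qed
qed


lemma spe_swap_iff: "(w,w') \<in> spe VH EH VG EG \<longleftrightarrow> (prod.swap w, prod.swap w') \<in> spe VG EG VH EH"
  by (cases w; cases w') (simp only: spe_iff swap_simp prod.inject; blast)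

lemma opo_swap_D:
  assumes "one_perfect_orientation (VG \<times> VH) (spe VG EG VH EH) D"
  shows "one_perfect_orientation (VH \<times> VG) (spe VH EH VG EG) {(w,w'). (prod.swap w, prod.swap w') \<in> D}"
proof -
  note d = opoD[OF assms]
  have "orientation (spe VH EH VG EG) {(w,w'). (prod.swap w, prod.swap w') \<in> D}"
    unfolding orientation_def
  proof (intro conjI allI impI)
    show "{(w, w'). (prod.swap w, prod.swap w') \<in> D} \<subseteq> spe VH EH VG EG"
      using d(1) by (auto simp: spe_swap_iff[of _ _ VH EH VG EG])
    fix u v
    show "(u, v) \<in> spe VH EH VG EG \<Longrightarrow>
       (u, v) \<in> {(w, w'). (prod.swap w, prod.swap w') \<in> D} \<or> (v, u) \<in> {(w, w'). (prod.swap w, prod.swap w') \<in> D}"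
      using d(2) by (auto simp: spe_swap_iff[of _ _ VH EH VG EG])
    show "(u, v) \<in> {(w, w'). (prod.swap w, prod.swap w') \<in> D} \<Longrightarrow> (v, u) \<notin> {(w, w'). (prod.swap w, prod.swap w') \<in> D}"
      using d(3) by auto
  qed
  moreover have "\<forall>v\<in>VH \<times> VG. clique (spe VH EH VG EG) {w. (v, w) \<in> {(w, w'). (prod.swap w, prod.swap w') \<in> D}}"
    unfolding clique_def
  proof (intro ballI impI)
    fix v x y assume v: "v \<in> VH \<times> VG" and x: "x \<in> {w. (v, w) \<in> {(w, w'). (prod.swap w, prod.swap w') \<in> D}}"
      and y: "y \<in> {w. (v, w) \<in> {(w, w'). (prod.swap w, prod.swap w') \<in> D}}" and xy: "x \<noteq> y"
    have "prod.swap v \<in> VG \<times> VH" using v by auto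
    moreover have "prod.swap x \<noteq> prod.swap y" using xy by (metis swap_swap)
    ultimately have "(prod.swap x, prod.swap y) \<in> spe VG EG VH EH"
      using d(4) x y by auto
    then show "(x, y) \<in> spe VH EH VG EG" by (simp add: spe_swap_iff[of _ _ VH EH VG EG])
  qed
  ultimately show ?thesis unfolding one_perfect_orientation_def by blast
qed

lemma opo_swap:
  "one_perfectly_orientable (VG \<times> VH) (spe VG EG VH EH) \<Longrightarrow> one_perfectly_orientable (VH \<times> VG) (spe VH EH VG EG)"
  unfolding one_perfectly_orientable_def using opo_swap_D by blast


lemma back_ii_abs:
  assumes g: "graph VG EG" and h: "graph VH EH"
    and part: "\<forall>g\<in>VG. (g \<in> Ap \<or> g \<in> Bp \<or> g \<in> Mm)" "Ap \<inter> Bp = {}" "Ap \<inter> Mm = {}" "Bp \<inter> Mm = {}"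
    and G1: "\<And>g g1 g2. g \<in> Ap \<Longrightarrow> g1 \<in> closed_nbhd EG g \<Longrightarrow> g2 \<in> closed_nbhd EG g \<Longrightarrow> g1 \<noteq> g2 \<Longrightarrow> (g1,g2) \<in> EG"
    and G2: "\<And>g g1 g2. g \<in> Bp \<Longrightarrow> g1 \<in> closed_nbhd EG g \<Longrightarrow> g2 \<in> closed_nbhd EG g \<Longrightarrow> g1 \<noteq> g2 \<Longrightarrow> (g1,g2) \<in> EG"
    and G3: "\<And>g g1 g2. g \<in> Mm \<Longrightarrow> g1 \<in> closed_nbhd EG g - Bp \<Longrightarrow> g2 \<in> closed_nbhd EG g - Bp \<Longrightarrow> g1 \<noteq> g2 \<Longrightarrow> (g1,g2) \<in> EG"
    and G3': "\<And>g g1 g2. g \<in> Mm \<Longrightarrow> g1 \<in> closed_nbhd EG g - Ap \<Longrightarrow> g2 \<in> closed_nbhd EG g - Ap \<Longrightarrow> g1 \<noteq> g2 \<Longrightarrow> (g1,g2) \<in> EG"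
    and G4: "\<And>g g'. g \<in> Ap \<Longrightarrow> g' \<in> Bp \<Longrightarrow> (g,g') \<notin> EG"
    and Ysub: "Y = VH - X" and Xsub: "X \<subseteq> VH"
    and H1: "\<And>x x'. x \<in> X \<Longrightarrow> x' \<in> X \<Longrightarrow> (x,x') \<in> EH\<^sup>* \<Longrightarrow> x \<noteq> x' \<Longrightarrow> (x,x') \<in> EH"
    and H1': "\<And>x x'. x \<in> Y \<Longrightarrow> x' \<in> Y \<Longrightarrow> (x,x') \<in> EH\<^sup>* \<Longrightarrow> x \<noteq> x' \<Longrightarrow> (x,x') \<in> EH"
    and H2: "\<And>x x'. x \<in> X \<Longrightarrow> x' \<in> X \<Longrightarrow> (x,x') \<in> EH\<^sup>* \<Longrightarrow>
               closed_nbhd EH x \<subseteq> closed_nbhd EH x' \<or> closed_nbhd EH x' \<subseteq> closed_nbhd EH x"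
  shows "one_perfectly_orientable (VG \<times> VH) (spe VG EG VH EH)"
proof -
  note gG = graphD[OF g] and gH = graphD[OF h]
  define NG where "NG = closed_nbhd EG"
  define NH where "NH = closed_nbhd EH"
  define P where "P = (\<lambda>x. {x'\<in>X. NH x \<subseteq> NH x'} \<union> {y\<in>Y. (x,y) \<in> EH})"
  define Q where "Q = (\<lambda>y. {x\<in>X. (y,x) \<in> EH} \<union> {y'\<in>Y. y' \<in> NH y \<and> {x\<in>X. (y,x) \<in> EH} \<subseteq> NH y'})"
  define cA where "cA = (\<lambda>h. if h \<in> X then P h else Y \<inter> NH h)"
  define cB where "cB = (\<lambda>h. if h \<in> X then X \<inter> NH h else Q h)"
  define cM where "cM = (\<lambda>h. if h \<in> X then P h else Q h)"
  define C1 where "C1 = (\<lambda>g h. if g \<in> Mm then (if h \<in> X then NG g - Bp else NG g - Ap) else NG g)"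
  define C2 where "C2 = (\<lambda>g h. if g \<in> Ap then cA h else if g \<in> Bp then cB h else cM h)"
  have NGV: "\<And>g. g \<in> VG \<Longrightarrow> NG g \<subseteq> VG" using gG unfolding NG_def closed_nbhd_def by auto
  have NHV: "\<And>h. h \<in> VH \<Longrightarrow> NH h \<subseteq> VH" using gH unfolding NH_def closed_nbhd_def by auto
  have XY: "X \<inter> Y = {}" "X \<union> Y = VH" using Ysub Xsub by auto
  have reachNH: "\<And>a b. a \<in> NH b \<Longrightarrow> (a,b) \<in> EH\<^sup>*" using gH unfolding NH_def closed_nbhd_def by auto
  have reach2: "\<And>a b c. a \<in> NH c \<Longrightarrow> b \<in> NH c \<Longrightarrow> (a,b) \<in> EH\<^sup>*"
    by (metis reachNH rtrancl_sym gH(3) rtrancl_trans)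
  have Q2: "\<And>x x'. x \<in> X \<Longrightarrow> x' \<in> X \<Longrightarrow> (x,x') \<in> EH \<Longrightarrow> NH x \<subseteq> NH x' \<or> NH x' \<subseteq> NH x"
    using H2 unfolding NH_def by blast
  have Q3: "\<And>y y'. y \<in> Y \<Longrightarrow> y' \<in> Y \<Longrightarrow> (y,y') \<in> EH \<Longrightarrow>
      {x\<in>X. (y,x) \<in> EH} \<subseteq> NH y' \<or> {x\<in>X. (y',x) \<in> EH} \<subseteq> NH y"
  proof (rule ccontr)
    fix y y' assume y: "y \<in> Y" "y' \<in> Y" "(y,y') \<in> EH"
      and n: "\<not> ({x\<in>X. (y,x) \<in> EH} \<subseteq> NH y' \<or> {x\<in>X. (y',x) \<in> EH} \<subseteq> NH y)"
    then obtain x1 x2 where x1: "x1 \<in> X" "(y,x1) \<in> EH" "x1 \<notin> NH y'" and x2: "x2 \<in> X" "(y',x2) \<in> EH" "x2 \<notin> NH y"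
      by blast
    have "(x1,x2) \<in> EH\<^sup>*"
    proof -
      have "(x1,y) \<in> EH" using x1 gH by blast
      then show ?thesis using y(3) x2(2) by (meson converse_rtrancl_into_rtrancl r_into_rtrancl)
    qed
    then have "NH x1 \<subseteq> NH x2 \<or> NH x2 \<subseteq> NH x1" using H2 x1 x2 unfolding NH_def by blast
    moreover have "y \<in> NH x1" "y' \<in> NH x2" using x1 x2 gH unfolding NH_def closed_nbhd_def by auto
    moreover have "y \<notin> NH x2" "y' \<notin> NH x1" using x1 x2 gH y XY unfolding NH_def closed_nbhd_def by auto
    ultimately show False by blast
  qed
  have C1V: "\<And>g h. g \<in> VG \<Longrightarrow> C1 g h \<subseteq> VG" using NGV unfolding C1_def by auto
  have C1cl: "\<And>g h g1 g2. g \<in> VG \<Longrightarrow> g1 \<in> C1 g h \<Longrightarrow> g2 \<in> C1 g h \<Longrightarrow> g1 \<noteq> g2 \<Longrightarrow> (g1,g2) \<in> EG"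
  proof -
    fix g h g1 g2 assume a: "g \<in> VG" "g1 \<in> C1 g h" "g2 \<in> C1 g h" "g1 \<noteq> g2"
    show "(g1,g2) \<in> EG"
    proof (cases "g \<in> Mm")
      case True then show ?thesis using a G3[of g g1 g2] G3'[of g g1 g2] unfolding C1_def NG_def
        by (auto split: if_splits)
    next
      case False
      then have "g \<in> Ap \<or> g \<in> Bp" using part a by blast
      then show ?thesis using a G1[of g g1 g2] G2[of g g1 g2] False unfolding C1_def NG_def by auto
    qed
  qed
  have Pcl: "\<And>x a b. x \<in> X \<Longrightarrow> a \<in> P x \<Longrightarrow> b \<in> P x \<Longrightarrow> a \<noteq> b \<Longrightarrow> (a,b) \<in> EH"
  proof -
    fix x a b assume x: "x \<in> X" and a: "a \<in> P x" and b: "b \<in> P x" and ab: "a \<noteq> b"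
    have xN: "x \<in> NH x" unfolding NH_def closed_nbhd_def by auto
    have yN: "\<And>y. (x,y) \<in> EH \<Longrightarrow> y \<in> NH x" unfolding NH_def closed_nbhd_def by auto
    have xx: "\<And>x'. x' \<in> X \<Longrightarrow> NH x \<subseteq> NH x' \<Longrightarrow> (x,x') \<in> EH\<^sup>*"
      using xN reachNH rtrancl_sym[OF gH(3)] by blast
    have xy: "\<And>y. (x,y) \<in> EH \<Longrightarrow> (x,y) \<in> EH\<^sup>*" by auto
    consider "a \<in> X" "NH x \<subseteq> NH a" | "a \<in> Y" "(x,a) \<in> EH" using a unfolding P_def by blast
    then show "(a,b) \<in> EH"
    proof cases
      case 1 note A1 = this
      consider "b \<in> X" "NH x \<subseteq> NH b" | "b \<in> Y" "(x,b) \<in> EH" using b unfolding P_def by blast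
      then show ?thesis
      proof cases
        case 1
        have "(a,x) \<in> EH\<^sup>*" using xx[of a] A1 rtrancl_sym[OF gH(3)] by blast
        then have "(a,b) \<in> EH\<^sup>*" using xx[of b] 1 by (meson rtrancl_trans)
        then show ?thesis using H1 A1 1 ab by blast
      next
        case 2
        have "b \<in> NH a" using 1 2 yN by blast
        then show ?thesis using ab gH unfolding NH_def closed_nbhd_def by auto
      qed
    next
      case 2 note A2 = this
      consider "b \<in> X" "NH x \<subseteq> NH b" | "b \<in> Y" "(x,b) \<in> EH" using b unfolding P_def by blast
      then show ?thesis
      proof cases
        case 1
        have "a \<in> NH b" using 1 2 yN by blast
        then show ?thesis using ab gH unfolding NH_def closed_nbhd_def by auto
      next
        case 2
        have "(a,b) \<in> EH\<^sup>*" using A2 2 reach2[of a x b] yN by blast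
        then show ?thesis using H1' A2 2 ab by blast
      qed
    qed
  qed
  have Qcl: "\<And>y a b. y \<in> Y \<Longrightarrow> a \<in> Q y \<Longrightarrow> b \<in> Q y \<Longrightarrow> a \<noteq> b \<Longrightarrow> (a,b) \<in> EH"
  proof -
    fix y a b assume y: "y \<in> Y" and a: "a \<in> Q y" and b: "b \<in> Q y" and ab: "a \<noteq> b"
    have yN: "\<And>z. (y,z) \<in> EH \<Longrightarrow> z \<in> NH y" unfolding NH_def closed_nbhd_def by auto
    consider "a \<in> X" "(y,a) \<in> EH" | "a \<in> Y" "a \<in> NH y" "{x\<in>X. (y,x) \<in> EH} \<subseteq> NH a" using a unfolding Q_def by blast
    then show "(a,b) \<in> EH"
    proof cases
      case 1 note A1 = this
      consider "b \<in> X" "(y,b) \<in> EH" | "b \<in> Y" "b \<in> NH y" "{x\<in>X. (y,x) \<in> EH} \<subseteq> NH b" using b unfolding Q_def by blast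
      then show ?thesis
      proof cases
        case 1
        then show ?thesis using H1 A1 1 ab reach2[of a y b] yN by blast
      next
        case 2
        have "a \<in> NH b" using 1 2 by blast
        then show ?thesis using ab gH unfolding NH_def closed_nbhd_def by auto
      qed
    next
      case 2 note A2 = this
      consider "b \<in> X" "(y,b) \<in> EH" | "b \<in> Y" "b \<in> NH y" "{x\<in>X. (y,x) \<in> EH} \<subseteq> NH b" using b unfolding Q_def by blast
      then show ?thesis
      proof cases
        case 1
        have "b \<in> NH a" using 1 2 by blast
        then show ?thesis using ab gH unfolding NH_def closed_nbhd_def by auto
      next
        case 2
        then show ?thesis using H1' A2 2 ab reach2[of a y b] by blast
      qed
    qed
  qed
  have XNcl: "\<And>h a b. a \<in> X \<inter> NH h \<Longrightarrow> b \<in> X \<inter> NH h \<Longrightarrow> a \<noteq> b \<Longrightarrow> (a,b) \<in> EH"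
    using H1 reach2 by blast
  have YNcl: "\<And>h a b. a \<in> Y \<inter> NH h \<Longrightarrow> b \<in> Y \<inter> NH h \<Longrightarrow> a \<noteq> b \<Longrightarrow> (a,b) \<in> EH"
    using H1' reach2 by blast
  have C2V: "\<And>g h. h \<in> VH \<Longrightarrow> C2 g h \<subseteq> VH"
    using NHV Xsub Ysub unfolding C2_def cA_def cB_def cM_def P_def Q_def by auto
  have C2cl: "\<And>g h a b. h \<in> VH \<Longrightarrow> a \<in> C2 g h \<Longrightarrow> b \<in> C2 g h \<Longrightarrow> a \<noteq> b \<Longrightarrow> (a,b) \<in> EH"
  proof -
    fix g h a b assume a: "h \<in> VH" "a \<in> C2 g h" "b \<in> C2 g h" "a \<noteq> b"
    have hXY: "h \<in> X \<or> h \<in> Y" using a(1) Ysub by auto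
    show "(a,b) \<in> EH" using a hXY Pcl[of h a b] Qcl[of h a b] XNcl[of a h b] YNcl[of a h b]
      unfolding C2_def cA_def cB_def cM_def by (auto split: if_splits)
  qed
  have selfP: "\<And>x. x \<in> X \<Longrightarrow> x \<in> P x" unfolding P_def by auto
  have selfQ: "\<And>y. y \<in> Y \<Longrightarrow> y \<in> Q y" unfolding Q_def NH_def closed_nbhd_def by auto
  have NHself: "\<And>h. h \<in> NH h" unfolding NH_def closed_nbhd_def by auto
  have NHe: "\<And>h h'. (h,h') \<in> EH \<Longrightarrow> h' \<in> NH h" unfolding NH_def closed_nbhd_def by auto
  have hXY: "\<And>h. h \<in> VH \<Longrightarrow> (h \<in> X \<and> h \<notin> Y) \<or> (h \<in> Y \<and> h \<notin> X)" using Ysub Xsub by auto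
  have PXX: "\<And>x x'. x \<in> X \<Longrightarrow> x' \<in> X \<Longrightarrow> (x,x') \<in> EH \<Longrightarrow> x' \<in> P x \<or> x \<in> P x'"
    using Q2 unfolding P_def by blast
  have QYY: "\<And>y y'. y \<in> Y \<Longrightarrow> y' \<in> Y \<Longrightarrow> (y,y') \<in> EH \<Longrightarrow> y' \<in> Q y \<or> y \<in> Q y'"
    using Q3 NHe gH(5) unfolding Q_def by blast
  have PXY: "\<And>x y. x \<in> X \<Longrightarrow> y \<in> Y \<Longrightarrow> (x,y) \<in> EH \<Longrightarrow> y \<in> P x" unfolding P_def by auto
  have QYX: "\<And>x y. x \<in> X \<Longrightarrow> y \<in> Y \<Longrightarrow> (y,x) \<in> EH \<Longrightarrow> x \<in> Q y" unfolding Q_def by auto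
  have totA: "\<And>h h'. h \<in> VH \<Longrightarrow> h' \<in> VH \<Longrightarrow> h = h' \<or> (h,h') \<in> EH \<Longrightarrow> h' \<in> cA h \<or> h \<in> cA h'"
    using hXY selfP NHself NHe PXX PXY gH(5) unfolding cA_def by (smt (verit) IntI)
  have totB: "\<And>h h'. h \<in> VH \<Longrightarrow> h' \<in> VH \<Longrightarrow> h = h' \<or> (h,h') \<in> EH \<Longrightarrow> h' \<in> cB h \<or> h \<in> cB h'"
    using hXY selfQ NHself NHe QYY QYX gH(5) unfolding cB_def by (smt (verit) IntI)
  have totM: "\<And>h h'. h \<in> VH \<Longrightarrow> h' \<in> VH \<Longrightarrow> h = h' \<or> (h,h') \<in> EH \<Longrightarrow> h' \<in> cM h \<or> h \<in> cM h'"
    using hXY selfQ selfP PXX QYY PXY gH(5) unfolding cM_def by metis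
  have mixA: "\<And>h h'. h \<in> VH \<Longrightarrow> h' \<in> VH \<Longrightarrow> h = h' \<or> (h,h') \<in> EH \<Longrightarrow> h' \<in> cA h \<or> (h' \<in> X \<and> h \<in> P h')"
    using hXY selfP NHself NHe PXX PXY gH(5) unfolding cA_def by (smt (verit) IntI)
  have mixB: "\<And>h h'. h \<in> VH \<Longrightarrow> h' \<in> VH \<Longrightarrow> h = h' \<or> (h,h') \<in> EH \<Longrightarrow> h' \<in> cB h \<or> (h' \<in> Y \<and> h \<in> Q h')"
    using hXY selfQ NHself NHe QYY QYX gH(5) unfolding cB_def by (smt (verit) IntI)
  have NGself: "\<And>g. g \<in> NG g" unfolding NG_def closed_nbhd_def by auto
  have NGe: "\<And>g g'. (g,g') \<in> EG \<Longrightarrow> g' \<in> NG g" unfolding NG_def closed_nbhd_def by auto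
  have tot: "\<And>g h g' h'. ((g,h),(g',h')) \<in> spe VG EG VH EH \<Longrightarrow>
      (g' \<in> C1 g h \<and> h' \<in> C2 g h) \<or> (g \<in> C1 g' h' \<and> h \<in> C2 g' h')"
  proof -
    fix g h g' h' assume e: "((g,h),(g',h')) \<in> spe VG EG VH EH"
    then have V: "g \<in> VG" "g' \<in> VG" "h \<in> VH" "h' \<in> VH" and gg: "g' = g \<or> (g,g') \<in> EG"
      and hh: "h' = h \<or> (h,h') \<in> EH" by (auto simp: spe_iff)
    have hh': "h = h' \<or> (h,h') \<in> EH" "h' = h \<or> (h',h) \<in> EH" using hh gH(5) by auto
    have gN: "g' \<in> NG g" "g \<in> NG g'" using gg NGself NGe gG(5) by auto
    have cg: "g \<in> Ap \<or> g \<in> Bp \<or> g \<in> Mm" "g' \<in> Ap \<or> g' \<in> Bp \<or> g' \<in> Mm" using part V by auto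
    consider "g \<in> Ap" "g' \<in> Ap" | "g \<in> Bp" "g' \<in> Bp" | "g \<in> Mm" "g' \<in> Mm"
      | "g \<in> Ap" "g' \<in> Mm" | "g \<in> Mm" "g' \<in> Ap" | "g \<in> Bp" "g' \<in> Mm" | "g \<in> Mm" "g' \<in> Bp"
      | "g \<in> Ap" "g' \<in> Bp" | "g \<in> Bp" "g' \<in> Ap" using cg by blast
    then show "(g' \<in> C1 g h \<and> h' \<in> C2 g h) \<or> (g \<in> C1 g' h' \<and> h \<in> C2 g' h')"
    proof cases
      case 1 then show ?thesis using totA[OF V(3,4) hh'(1)] gN part unfolding C1_def C2_def by auto
    next
      case 2 then show ?thesis using totB[OF V(3,4) hh'(1)] gN part unfolding C1_def C2_def by auto
    next
      case 3 then show ?thesis using totM[OF V(3,4) hh'(1)] gN part unfolding C1_def C2_def by auto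
    next
      case 4 then show ?thesis using mixA[OF V(3,4) hh'(1)] gN part unfolding C1_def C2_def cM_def by auto
    next
      case 5 then show ?thesis using mixA[OF V(4,3) hh'(2)] gN part unfolding C1_def C2_def cM_def by auto
    next
      case 6 then show ?thesis using mixB[OF V(3,4) hh'(1)] gN part XY unfolding C1_def C2_def cM_def by auto
    next
      case 7 then show ?thesis using mixB[OF V(4,3) hh'(2)] gN part XY unfolding C1_def C2_def cM_def by auto
    next
      case 8 then show ?thesis using G4 gg part by auto
    next
      case 9 then show ?thesis using G4 gg gG(5) part by auto
    qed
  qed
  show ?thesis
  proof (rule cover_opo[where C = "\<lambda>(g,h). C1 g h \<times> C2 g h"])
    show "finite (VG \<times> VH)" using gG gH by auto
    show "spe VG EG VH EH \<subseteq> (VG \<times> VH) \<times> VG \<times> VH" by (rule spe_sub)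
    show "\<forall>x. (x, x) \<notin> spe VG EG VH EH" by (auto simp: strong_product_edges_def)
    show "sym (spe VG EG VH EH)" using gG gH unfolding sym_def strong_product_edges_def by auto
    show "\<forall>w\<in>VG \<times> VH. \<forall>a\<in>(case w of (g, h) \<Rightarrow> C1 g h \<times> C2 g h).
        \<forall>b\<in>(case w of (g, h) \<Rightarrow> C1 g h \<times> C2 g h). a \<noteq> b \<longrightarrow> (a, b) \<in> spe VG EG VH EH"
    proof (intro ballI impI)
      fix w a b assume w: "w \<in> VG \<times> VH" and a: "a \<in> (case w of (g, h) \<Rightarrow> C1 g h \<times> C2 g h)"
        and b: "b \<in> (case w of (g, h) \<Rightarrow> C1 g h \<times> C2 g h)" and ab: "a \<noteq> b"
      obtain g0 h0 where w0: "w = (g0,h0)" by (cases w)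
      obtain g1 h1 where a0: "a = (g1,h1)" by (cases a)
      obtain g2 h2 where b0: "b = (g2,h2)" by (cases b)
      have gw: "g0 \<in> VG" "h0 \<in> VH" using w w0 by auto
      have m: "g1 \<in> C1 g0 h0" "g2 \<in> C1 g0 h0" "h1 \<in> C2 g0 h0" "h2 \<in> C2 g0 h0"
        using a b w0 a0 b0 by auto
      show "(a, b) \<in> spe VG EG VH EH"
        using C1cl[OF gw(1) m(1,2)] C2cl[OF gw(2) m(3,4)] C1V[OF gw(1)] C2V[OF gw(2)] m ab
        unfolding a0 b0 spe_iff by blast
    qed
    show "\<forall>w w'. (w, w') \<in> spe VG EG VH EH \<longrightarrow>
        w' \<in> (case w of (g, h) \<Rightarrow> C1 g h \<times> C2 g h) \<or> w \<in> (case w' of (g, h) \<Rightarrow> C1 g h \<times> C2 g h)"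
      using tot by auto
  qed
qed


lemma comp_eq:
  assumes "graph V E" "(g,g') \<in> E\<^sup>*"
  shows "{y \<in> V. (g', y) \<in> E\<^sup>*} = {y \<in> V. (g, y) \<in> E\<^sup>*}"
  using assms rtrancl_sym[OF graphD(3)[OF assms(1)]] by (auto intro: rtrancl_trans)

lemma nbhd_induced:
  assumes "graph V E" "x \<in> {y \<in> V. (g, y) \<in> E\<^sup>*}"
  shows "closed_nbhd (induced_edges E {y \<in> V. (g, y) \<in> E\<^sup>*}) x = closed_nbhd E x"
  using assms graphD[OF assms(1)] unfolding closed_nbhd_def induced_edges_def
  by (auto intro: rtrancl_into_rtrancl)

lemma back_ii:
  assumes g: "graph VG EG" and h: "graph VH EH"
    and c2: "\<forall>C\<in>components VG EG. two_complete C (induced_edges EG C)"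
    and cc: "\<forall>C\<in>components VH EH. co_chain C (induced_edges EH C)"
  shows "one_perfectly_orientable (VG \<times> VH) (spe VG EG VH EH)"
proof -
  note gG = graphD[OF g] and gH = graphD[OF h]
  define cG where "cG = (\<lambda>g. {y \<in> VG. (g, y) \<in> EG\<^sup>*})"
  define PG where "PG = (\<lambda>g p. fst p \<union> snd p = cG g \<and> fst p \<inter> snd p \<noteq> {} \<and>
      (\<forall>x y. (x, y) \<in> induced_edges EG (cG g) \<longleftrightarrow> x \<noteq> y \<and> ((x \<in> fst p \<and> y \<in> fst p) \<or> (x \<in> snd p \<and> y \<in> snd p))))"
  define AB where "AB = (\<lambda>g. SOME p. PG g p)"
  have ABp: "\<And>g. g \<in> VG \<Longrightarrow> PG g (AB g)"
  proof -
    fix g assume gv: "g \<in> VG"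
    have "cG g \<in> components VG EG" unfolding cG_def by (rule comp_of[OF gv])
    then have "two_complete (cG g) (induced_edges EG (cG g))" using c2 by blast
    then obtain A B where AB: "A \<union> B = cG g" "A \<inter> B \<noteq> {}"
      "\<forall>x y. (x, y) \<in> induced_edges EG (cG g) \<longleftrightarrow> x \<noteq> y \<and> ((x \<in> A \<and> y \<in> A) \<or> (x \<in> B \<and> y \<in> B))"
      unfolding two_complete_def by blast
    then have "PG g (A,B)" unfolding PG_def by simp
    then have "\<exists>p. PG g p" by blast
    then show "PG g (AB g)" unfolding AB_def by (rule someI_ex)
  qed
  have cGeq: "\<And>g g'. (g,g') \<in> EG\<^sup>* \<Longrightarrow> cG g' = cG g"
    using comp_eq[OF g] unfolding cG_def by blast
  have ABeq: "\<And>g g'. (g,g') \<in> EG\<^sup>* \<Longrightarrow> AB g' = AB g"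
    unfolding AB_def PG_def by (simp only: cGeq)
  have selfc: "\<And>g. g \<in> VG \<Longrightarrow> g \<in> cG g" unfolding cG_def by auto
  have Gedge: "\<And>g u v. g \<in> VG \<Longrightarrow> u \<in> cG g \<Longrightarrow> v \<in> cG g \<Longrightarrow>
       (u,v) \<in> EG \<longleftrightarrow> u \<noteq> v \<and> ((u \<in> fst (AB g) \<and> v \<in> fst (AB g)) \<or> (u \<in> snd (AB g) \<and> v \<in> snd (AB g)))"
    using ABp unfolding PG_def induced_edges_def by blast
  have inAB: "\<And>g. g \<in> VG \<Longrightarrow> g \<in> fst (AB g) \<or> g \<in> snd (AB g)"
    using ABp selfc unfolding PG_def by blast
  have nbc: "\<And>g v. g \<in> VG \<Longrightarrow> v \<in> closed_nbhd EG g \<Longrightarrow> v \<in> cG g \<and> AB v = AB g \<and> v \<in> VG"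
  proof -
    fix g v assume a: "g \<in> VG" "v \<in> closed_nbhd EG g"
    then have r: "(g,v) \<in> EG\<^sup>*" unfolding closed_nbhd_def by auto
    have "v \<in> VG" using a gG unfolding closed_nbhd_def by auto
    then show "v \<in> cG g \<and> AB v = AB g \<and> v \<in> VG" using r ABeq(1)[OF r] unfolding cG_def by blast
  qed
  define Ap where "Ap = {g \<in> VG. g \<in> fst (AB g) \<and> g \<notin> snd (AB g)}"
  define Bp where "Bp = {g \<in> VG. g \<in> snd (AB g) \<and> g \<notin> fst (AB g)}"
  define Mm where "Mm = {g \<in> VG. g \<in> fst (AB g) \<and> g \<in> snd (AB g)}"
  have inA: "\<And>g v. g \<in> Ap \<Longrightarrow> v \<in> closed_nbhd EG g \<Longrightarrow> v \<in> fst (AB g)"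
  proof -
    fix g v assume a: "g \<in> Ap" "v \<in> closed_nbhd EG g"
    show "v \<in> fst (AB g)"
    proof (cases "v = g")
      case True then show ?thesis using a unfolding Ap_def by auto
    next
      case False
      then have "(g,v) \<in> EG" using a unfolding closed_nbhd_def by auto
      then show ?thesis using Gedge[of g g v] nbc[of g v] a selfc unfolding Ap_def by auto
    qed
  qed
  have inB: "\<And>g v. g \<in> Bp \<Longrightarrow> v \<in> closed_nbhd EG g \<Longrightarrow> v \<in> snd (AB g)"
  proof -
    fix g v assume a: "g \<in> Bp" "v \<in> closed_nbhd EG g"
    show "v \<in> snd (AB g)"
    proof (cases "v = g")
      case True then show ?thesis using a unfolding Bp_def by auto
    next
      case False
      then have "(g,v) \<in> EG" using a unfolding closed_nbhd_def by auto
      then show ?thesis using Gedge[of g g v] nbc[of g v] a selfc unfolding Bp_def by auto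
    qed
  qed
  have notBp: "\<And>g v. g \<in> VG \<Longrightarrow> v \<in> closed_nbhd EG g \<Longrightarrow> v \<notin> Bp \<Longrightarrow> v \<in> fst (AB g)"
  proof -
    fix g v assume a: "g \<in> VG" "v \<in> closed_nbhd EG g" "v \<notin> Bp"
    have "v \<in> VG" "AB v = AB g" using nbc[OF a(1,2)] by auto
    then show "v \<in> fst (AB g)" using inAB[of v] a(3) unfolding Bp_def by auto
  qed
  have notAp: "\<And>g v. g \<in> VG \<Longrightarrow> v \<in> closed_nbhd EG g \<Longrightarrow> v \<notin> Ap \<Longrightarrow> v \<in> snd (AB g)"
  proof -
    fix g v assume a: "g \<in> VG" "v \<in> closed_nbhd EG g" "v \<notin> Ap"
    have "v \<in> VG" "AB v = AB g" using nbc[OF a(1,2)] by auto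
    then show "v \<in> snd (AB g)" using inAB[of v] a(3) unfolding Ap_def by auto
  qed
  define cH where "cH = (\<lambda>h. {y \<in> VH. (h, y) \<in> EH\<^sup>*})"
  define PH where "PH = (\<lambda>h t. fst t \<union> fst (snd t) = cH h \<and> fst t \<inter> fst (snd t) = {}
      \<and> clique (induced_edges EH (cH h)) (fst t) \<and> clique (induced_edges EH (cH h)) (fst (snd t))
      \<and> distinct (snd (snd t)) \<and> set (snd (snd t)) = fst t
      \<and> (\<forall>i j. i < j \<and> j < length (snd (snd t)) \<longrightarrow>
          closed_nbhd (induced_edges EH (cH h)) (snd (snd t) ! i) \<subseteq> closed_nbhd (induced_edges EH (cH h)) (snd (snd t) ! j)))"
  define TT where "TT = (\<lambda>h. SOME t. PH h t)"
  have TTp: "\<And>h. h \<in> VH \<Longrightarrow> PH h (TT h)"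
  proof -
    fix h assume hv: "h \<in> VH"
    have "cH h \<in> components VH EH" unfolding cH_def by (rule comp_of[OF hv])
    then have "co_chain (cH h) (induced_edges EH (cH h))" using cc by blast
    then obtain X Y xs where "X \<union> Y = cH h \<and> X \<inter> Y = {} \<and> clique (induced_edges EH (cH h)) X \<and> clique (induced_edges EH (cH h)) Y \<and>
      distinct xs \<and> set xs = X \<and>
      (\<forall>i j. i < j \<and> j < length xs \<longrightarrow> closed_nbhd (induced_edges EH (cH h)) (xs ! i) \<subseteq> closed_nbhd (induced_edges EH (cH h)) (xs ! j))"
      unfolding co_chain_def by blast
    then have "PH h (X,Y,xs)" unfolding PH_def by simp
    then have "\<exists>t. PH h t" by blast
    then show "PH h (TT h)" unfolding TT_def by (rule someI_ex)
  qed
  have cHeq: "\<And>g g'. (g,g') \<in> EH\<^sup>* \<Longrightarrow> cH g' = cH g"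
    using comp_eq[OF h] unfolding cH_def by blast
  have TTeq: "\<And>g g'. (g,g') \<in> EH\<^sup>* \<Longrightarrow> TT g' = TT g"
    unfolding TT_def PH_def by (simp only: cHeq)
  define X where "X = {h \<in> VH. h \<in> fst (TT h)}"
  have selfH: "\<And>h. h \<in> VH \<Longrightarrow> h \<in> cH h" unfolding cH_def by auto
  have inXY: "\<And>h. h \<in> VH \<Longrightarrow> (h \<in> fst (TT h) \<and> h \<notin> fst (snd (TT h))) \<or> (h \<notin> fst (TT h) \<and> h \<in> fst (snd (TT h)))"
    using TTp selfH unfolding PH_def by blast
  have cHV: "\<And>h. cH h \<subseteq> VH" unfolding cH_def by auto
  show ?thesis
  proof (rule back_ii_abs[OF g h, where Ap = Ap and Bp = Bp and Mm = Mm and X = X and Y = "VH - X"])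
    show "\<forall>g\<in>VG. g \<in> Ap \<or> g \<in> Bp \<or> g \<in> Mm" using inAB unfolding Ap_def Bp_def Mm_def by auto
    show "Ap \<inter> Bp = {}" "Ap \<inter> Mm = {}" "Bp \<inter> Mm = {}" unfolding Ap_def Bp_def Mm_def by auto
    show "\<And>g g1 g2. g \<in> Ap \<Longrightarrow> g1 \<in> closed_nbhd EG g \<Longrightarrow> g2 \<in> closed_nbhd EG g \<Longrightarrow> g1 \<noteq> g2 \<Longrightarrow> (g1, g2) \<in> EG"
    proof -
      fix g g1 g2 assume a: "g \<in> Ap" "g1 \<in> closed_nbhd EG g" "g2 \<in> closed_nbhd EG g" "g1 \<noteq> g2"
      have gV: "g \<in> VG" using a unfolding Ap_def by auto
      show "(g1,g2) \<in> EG" using inA[OF a(1,2)] inA[OF a(1,3)] nbc[OF gV a(2)] nbc[OF gV a(3)] Gedge[OF gV] a(4) by auto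
    qed
    show "\<And>g g1 g2. g \<in> Bp \<Longrightarrow> g1 \<in> closed_nbhd EG g \<Longrightarrow> g2 \<in> closed_nbhd EG g \<Longrightarrow> g1 \<noteq> g2 \<Longrightarrow> (g1, g2) \<in> EG"
    proof -
      fix g g1 g2 assume a: "g \<in> Bp" "g1 \<in> closed_nbhd EG g" "g2 \<in> closed_nbhd EG g" "g1 \<noteq> g2"
      have gV: "g \<in> VG" using a unfolding Bp_def by auto
      show "(g1,g2) \<in> EG" using inB[OF a(1,2)] inB[OF a(1,3)] nbc[OF gV a(2)] nbc[OF gV a(3)] Gedge[OF gV] a(4) by auto
    qed
    show "\<And>g g1 g2. g \<in> Mm \<Longrightarrow> g1 \<in> closed_nbhd EG g - Bp \<Longrightarrow> g2 \<in> closed_nbhd EG g - Bp \<Longrightarrow> g1 \<noteq> g2 \<Longrightarrow> (g1, g2) \<in> EG"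
    proof -
      fix g g1 g2 assume a: "g \<in> Mm" "g1 \<in> closed_nbhd EG g - Bp" "g2 \<in> closed_nbhd EG g - Bp" "g1 \<noteq> g2"
      have gV: "g \<in> VG" using a unfolding Mm_def by auto
      have "g1 \<in> fst (AB g)" "g2 \<in> fst (AB g)" using a notBp[OF gV] by auto
      then show "(g1,g2) \<in> EG" using Gedge[OF gV] nbc[OF gV] a by auto
    qed
    show "\<And>g g1 g2. g \<in> Mm \<Longrightarrow> g1 \<in> closed_nbhd EG g - Ap \<Longrightarrow> g2 \<in> closed_nbhd EG g - Ap \<Longrightarrow> g1 \<noteq> g2 \<Longrightarrow> (g1, g2) \<in> EG"
    proof -
      fix g g1 g2 assume a: "g \<in> Mm" "g1 \<in> closed_nbhd EG g - Ap" "g2 \<in> closed_nbhd EG g - Ap" "g1 \<noteq> g2"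
      have gV: "g \<in> VG" using a unfolding Mm_def by auto
      have "g1 \<in> snd (AB g)" "g2 \<in> snd (AB g)" using a notAp[OF gV] by auto
      then show "(g1,g2) \<in> EG" using Gedge[OF gV] nbc[OF gV] a by auto
    qed
    show "\<And>g g'. g \<in> Ap \<Longrightarrow> g' \<in> Bp \<Longrightarrow> (g, g') \<notin> EG"
    proof
      fix g g' assume a: "g \<in> Ap" "g' \<in> Bp" "(g,g') \<in> EG"
      have gV: "g \<in> VG" using a unfolding Ap_def by auto
      have "g' \<in> closed_nbhd EG g" using a unfolding closed_nbhd_def by auto
      then show False using nbc[OF gV] Gedge[OF gV, of g g'] selfc[OF gV] a unfolding Ap_def Bp_def by auto
    qed
    show "VH - X = VH - X" by simp
    show "X \<subseteq> VH" unfolding X_def by auto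
    show "\<And>x x'. x \<in> X \<Longrightarrow> x' \<in> X \<Longrightarrow> (x, x') \<in> EH\<^sup>* \<Longrightarrow> x \<noteq> x' \<Longrightarrow> (x, x') \<in> EH"
    proof -
      fix x x' assume a: "x \<in> X" "x' \<in> X" "(x, x') \<in> EH\<^sup>*" "x \<noteq> x'"
      have xv: "x \<in> VH" "x' \<in> VH" using a unfolding X_def by auto
      have m: "x \<in> fst (TT x)" "x' \<in> fst (TT x)" using a TTeq[OF a(3)] unfolding X_def by auto
      have c: "x \<in> cH x" "x' \<in> cH x" using xv a(3) unfolding cH_def by auto
      have "clique (induced_edges EH (cH x)) (fst (TT x))" using TTp[OF xv(1)] unfolding PH_def by blast
      then show "(x,x') \<in> EH" using m a(4) unfolding clique_def induced_edges_def by blast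
    qed
    show "\<And>x x'. x \<in> VH - X \<Longrightarrow> x' \<in> VH - X \<Longrightarrow> (x, x') \<in> EH\<^sup>* \<Longrightarrow> x \<noteq> x' \<Longrightarrow> (x, x') \<in> EH"
    proof -
      fix x x' assume a: "x \<in> VH - X" "x' \<in> VH - X" "(x, x') \<in> EH\<^sup>*" "x \<noteq> x'"
      have xv: "x \<in> VH" "x' \<in> VH" using a by auto
      have e: "TT x' = TT x" using TTeq[OF a(3)] .
      have m: "x \<in> fst (snd (TT x))" "x' \<in> fst (snd (TT x))" using a inXY[OF xv(1)] inXY[OF xv(2)] e unfolding X_def by auto
      have "clique (induced_edges EH (cH x)) (fst (snd (TT x)))" using TTp[OF xv(1)] unfolding PH_def by blast
      then show "(x,x') \<in> EH" using m a(4) unfolding clique_def induced_edges_def by blast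
    qed
    show "\<And>x x'. x \<in> X \<Longrightarrow> x' \<in> X \<Longrightarrow> (x, x') \<in> EH\<^sup>* \<Longrightarrow>
       closed_nbhd EH x \<subseteq> closed_nbhd EH x' \<or> closed_nbhd EH x' \<subseteq> closed_nbhd EH x"
    proof -
      fix x x' assume a: "x \<in> X" "x' \<in> X" "(x, x') \<in> EH\<^sup>*"
      have xv: "x \<in> VH" "x' \<in> VH" using a unfolding X_def by auto
      have m: "x \<in> fst (TT x)" "x' \<in> fst (TT x)" using a TTeq[OF a(3)] unfolding X_def by auto
      have c: "x \<in> cH x" "x' \<in> cH x" using xv a(3) unfolding cH_def by auto
      have p: "set (snd (snd (TT x))) = fst (TT x)"
        "\<forall>i j. i < j \<and> j < length (snd (snd (TT x))) \<longrightarrow>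
          closed_nbhd (induced_edges EH (cH x)) (snd (snd (TT x)) ! i) \<subseteq> closed_nbhd (induced_edges EH (cH x)) (snd (snd (TT x)) ! j)"
        using TTp[OF xv(1)] unfolding PH_def by blast+
      obtain i j where ij: "i < length (snd (snd (TT x)))" "snd (snd (TT x)) ! i = x"
        "j < length (snd (snd (TT x)))" "snd (snd (TT x)) ! j = x'"
        using m p(1) by (metis in_set_conv_nth)
      have nb: "closed_nbhd (induced_edges EH (cH x)) x = closed_nbhd EH x"
        "closed_nbhd (induced_edges EH (cH x)) x' = closed_nbhd EH x'"
        using nbhd_induced[OF h] c unfolding cH_def by auto
      have "i < j \<or> j < i \<or> i = j" by arith
      then show "closed_nbhd EH x \<subseteq> closed_nbhd EH x' \<or> closed_nbhd EH x' \<subseteq> closed_nbhd EH x"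
        using p(2) ij nb by (metis order_refl)
    qed
  qed
qed


lemma reach_adj:
  assumes g: "graph V E"
    and clT: "\<And>g p q. g \<in> V \<Longrightarrow> p \<in> closed_nbhd E g \<Longrightarrow> q \<in> closed_nbhd E g \<Longrightarrow> p \<notin> T \<Longrightarrow> q \<notin> T \<Longrightarrow> p \<noteq> q \<Longrightarrow> (p,q) \<in> E"
    and clT': "\<And>g p q. g \<in> V \<Longrightarrow> p \<in> closed_nbhd E g \<Longrightarrow> q \<in> closed_nbhd E g \<Longrightarrow> p \<notin> T' \<Longrightarrow> q \<notin> T' \<Longrightarrow> p \<noteq> q \<Longrightarrow> (p,q) \<in> E"
    and disj: "T \<inter> T' = {}"
    and KT: "\<And>g1 g2 p q. (g1,g2) \<in> E \<Longrightarrow> (g1,p) \<in> E \<Longrightarrow> (g2,q) \<in> E \<Longrightarrow> p \<noteq> g2 \<Longrightarrow> (p,g2) \<notin> E \<Longrightarrow>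
              q \<noteq> g1 \<Longrightarrow> (q,g1) \<notin> E \<Longrightarrow> p \<notin> T \<Longrightarrow> q \<notin> T \<Longrightarrow> False"
  shows "(p,q) \<in> E ^^ n \<Longrightarrow> p \<notin> T \<Longrightarrow> q \<notin> T \<Longrightarrow> p = q \<or> (p,q) \<in> E"
proof (induction n arbitrary: p q rule: less_induct)
  case (less n)
  note gg = graphD[OF g]
  have N1: "\<And>a b. (a,b) \<in> E \<Longrightarrow> b \<in> closed_nbhd E a" "\<And>a b. (a,b) \<in> E \<Longrightarrow> a \<in> closed_nbhd E b"
    "\<And>a. a \<in> closed_nbhd E a" using gg unfolding closed_nbhd_def by auto
  have common: "\<And>w. (p,w) \<in> E \<or> p = w \<Longrightarrow> (w,q) \<in> E \<or> w = q \<Longrightarrow> w \<in> V \<Longrightarrow> p = q \<or> (p,q) \<in> E"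
    using clT less.prems(2,3) N1 by metis
  show ?case
  proof (cases n)
    case 0 then show ?thesis using less.prems by auto
  next
    case (Suc m)
    have pq: "(p,q) \<in> E ^^ Suc m" using less.prems(1) Suc by (simp only:)
    then obtain w1 where w1: "(p,w1) \<in> E" "(w1,q) \<in> E ^^ m" by (meson relpow_Suc_D2)
    have w1V: "w1 \<in> V" using w1 gg by auto
    show ?thesis
    proof (cases "w1 \<in> T")
      case False
      have "w1 = q \<or> (w1,q) \<in> E" using less.IH[of m w1 q] Suc w1 False less.prems by auto
      then show ?thesis using common w1 w1V by blast
    next
      case w1T: True
      show ?thesis
      proof (cases m)
        case 0 then show ?thesis using w1 common w1V by auto
      next
        case (Suc k)
        have "(w1,q) \<in> E ^^ Suc k" using w1(2) Suc by (simp only:)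
        then obtain w2 where w2: "(w1,w2) \<in> E" "(w2,q) \<in> E ^^ k" by (meson relpow_Suc_D2)
        have w2V: "w2 \<in> V" using w2 gg by auto
        have pw2: "(p,w2) \<in> E ^^ Suc (Suc 0)" using w1(1) w2(1) by (meson relpow_Suc_I2 relpow_0_I)
        show ?thesis
        proof (cases "w2 \<in> T")
          case False
          show ?thesis
          proof (cases k)
            case 0 then show ?thesis using w2 False w1 common w1V by auto
          next
            case (Suc l)
            have a: "p = w2 \<or> (p,w2) \<in> E" using less.IH[of "Suc (Suc 0)" p w2] pw2 False less.prems \<open>n = Suc m\<close> \<open>m = Suc k\<close> Suc by auto
            have b: "w2 = q \<or> (w2,q) \<in> E" using less.IH[of k w2 q] w2 False less.prems \<open>n = Suc m\<close> \<open>m = Suc k\<close> by auto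
            show ?thesis using common a b w2V by blast
          qed
        next
          case w2T: True
          show ?thesis
          proof (cases k)
            case 0
            then have "w2 = q" using w2 by auto
            then show ?thesis using w2T less.prems by auto
          next
            case (Suc l)
            have "(w2,q) \<in> E ^^ Suc l" using w2(2) Suc by (simp only:)
            then obtain w3 where w3: "(w2,w3) \<in> E" "(w3,q) \<in> E ^^ l" by (meson relpow_Suc_D2)
            have w3V: "w3 \<in> V" using w3 gg by auto
            show ?thesis
            proof (cases l)
              case 0
              then have q: "w3 = q" using w3 by auto
              show ?thesis
              proof (rule ccontr)
                assume nq: "\<not> (p = q \<or> (p, q) \<in> E)"
                have "(p,w2) \<notin> E" using common[of w2] w2V w3 q nq by auto
                moreover have "(q,w1) \<notin> E" using common[of w1] w1V w1 q nq gg(5) by auto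
                moreover have "p \<noteq> w2" "q \<noteq> w1" using w1T w2T less.prems q by auto
                ultimately show False using KT[of w1 w2 p q] w1 w2 w3 q less.prems gg(5) by auto
              qed
            next
              case (Suc l')
              show ?thesis
              proof (cases "w3 \<in> T")
                case False
                have pw3: "(p,w3) \<in> E ^^ Suc (Suc (Suc 0))" using w1(1) w2(1) w3(1) by (meson relpow_Suc_I2 relpow_0_I)
                have a: "p = w3 \<or> (p,w3) \<in> E" using less.IH[of "Suc (Suc (Suc 0))" p w3] pw3 False less.prems \<open>n = Suc m\<close> \<open>m = Suc k\<close> \<open>k = Suc l\<close> \<open>l = Suc l'\<close> by auto
                have b: "w3 = q \<or> (w3,q) \<in> E" using less.IH[of l w3 q] w3 False less.prems \<open>n = Suc m\<close> \<open>m = Suc k\<close> \<open>k = Suc l\<close> by auto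
                show ?thesis using common a b w3V by blast
              next
                case True
                have "w1 \<notin> T'" "w3 \<notin> T'" using w1T True disj by auto
                then have "w1 = w3 \<or> (w1,w3) \<in> E" using clT'[of w2 w1 w3] w2V N1 w2(1) w3(1) by auto
                then show ?thesis
                proof
                  assume "w1 = w3"
                  then have "(p,q) \<in> E ^^ Suc l" using w1(1) w3(2) by (meson relpow_Suc_I2)
                  then show ?thesis using less.IH[of "Suc l" p q] less.prems \<open>n = Suc m\<close> \<open>m = Suc k\<close> \<open>k = Suc l\<close> by auto
                next
                  assume "(w1,w3) \<in> E"
                  then have "(p,q) \<in> E ^^ Suc (Suc l)" using w1(1) w3(2) by (meson relpow_Suc_I2)
                  then show ?thesis using less.IH[of "Suc (Suc l)" p q] less.prems \<open>n = Suc m\<close> \<open>m = Suc k\<close> \<open>k = Suc l\<close> by auto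
                qed
              qed
            qed
          qed
        qed
      qed
    qed
  qed
qed


lemma sorted_nested:
  assumes fin: "finite X" and finN: "\<And>x. x \<in> X \<Longrightarrow> finite (N x)"
    and tot: "\<And>x x'. x \<in> X \<Longrightarrow> x' \<in> X \<Longrightarrow> N x \<subseteq> N x' \<or> N x' \<subseteq> N x"
  shows "\<exists>xs. distinct xs \<and> set xs = X \<and> (\<forall>i j. i < j \<and> j < length xs \<longrightarrow> N (xs ! i) \<subseteq> N (xs ! j))"
proof -
  obtain xs0 where xs0: "distinct xs0" "set xs0 = X" using finite_distinct_list[OF fin] by blast
  define xs where "xs = sort_key (\<lambda>x. card (N x)) xs0"
  have d: "distinct xs" "set xs = X" using xs0 unfolding xs_def by auto
  have s: "sorted (map (\<lambda>x. card (N x)) xs)" unfolding xs_def by (rule sorted_sort_key)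
  have "\<forall>i j. i < j \<and> j < length xs \<longrightarrow> N (xs ! i) \<subseteq> N (xs ! j)"
  proof (intro allI impI)
    fix i j assume ij: "i < j \<and> j < length xs"
    have c: "card (N (xs ! i)) \<le> card (N (xs ! j))"
      using s ij unfolding sorted_iff_nth_mono by auto
    have m: "xs ! i \<in> X" "xs ! j \<in> X" using ij d by auto
    show "N (xs ! i) \<subseteq> N (xs ! j)"
    proof (cases "N (xs ! i) \<subseteq> N (xs ! j)")
      case False
      then have "N (xs ! j) \<subseteq> N (xs ! i)" using tot m by blast
      then have "N (xs ! j) = N (xs ! i)" using card_subset_eq[OF finN[OF m(1)]] c
        by (meson antisym card_mono finN m(1))
      then show ?thesis by simp
    qed simp
  qed
  then show ?thesis using d by blast
qed

lemma cc_abs: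
  assumes g: "graph V E"
    and clT: "\<And>g p q. g \<in> V \<Longrightarrow> p \<in> closed_nbhd E g \<Longrightarrow> q \<in> closed_nbhd E g \<Longrightarrow> p \<notin> T \<Longrightarrow> q \<notin> T \<Longrightarrow> p \<noteq> q \<Longrightarrow> (p,q) \<in> E"
    and clT': "\<And>g p q. g \<in> V \<Longrightarrow> p \<in> closed_nbhd E g \<Longrightarrow> q \<in> closed_nbhd E g \<Longrightarrow> p \<notin> T' \<Longrightarrow> q \<notin> T' \<Longrightarrow> p \<noteq> q \<Longrightarrow> (p,q) \<in> E"
    and disj: "T \<inter> T' = {}"
    and KT: "\<And>g1 g2 p q. (g1,g2) \<in> E \<Longrightarrow> (g1,p) \<in> E \<Longrightarrow> (g2,q) \<in> E \<Longrightarrow> p \<noteq> g2 \<Longrightarrow> (p,g2) \<notin> E \<Longrightarrow>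
              q \<noteq> g1 \<Longrightarrow> (q,g1) \<notin> E \<Longrightarrow> p \<notin> T \<Longrightarrow> q \<notin> T \<Longrightarrow> False"
    and KT': "\<And>g1 g2 p q. (g1,g2) \<in> E \<Longrightarrow> (g1,p) \<in> E \<Longrightarrow> (g2,q) \<in> E \<Longrightarrow> p \<noteq> g2 \<Longrightarrow> (p,g2) \<notin> E \<Longrightarrow>
              q \<noteq> g1 \<Longrightarrow> (q,g1) \<notin> E \<Longrightarrow> p \<notin> T' \<Longrightarrow> q \<notin> T' \<Longrightarrow> False"
  shows "\<forall>C\<in>components V E. co_chain C (induced_edges E C)"
proof
  fix C assume "C \<in> components V E"
  then obtain x0 where x0: "x0 \<in> V" "C = {y \<in> V. (x0, y) \<in> E\<^sup>*}" unfolding components_def by blast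
  note gg = graphD[OF g]
  have reachC: "\<And>y z. y \<in> C \<Longrightarrow> z \<in> C \<Longrightarrow> (y,z) \<in> E\<^sup>*"
    using x0 rtrancl_sym[OF gg(3)] by (auto intro: rtrancl_trans)
  have disj': "T' \<inter> T = {}" using disj by auto
  have adjT: "\<And>y z. y \<in> C \<Longrightarrow> z \<in> C \<Longrightarrow> y \<notin> T \<Longrightarrow> z \<notin> T \<Longrightarrow> y = z \<or> (y,z) \<in> E"
  proof -
    fix y z assume a: "y \<in> C" "z \<in> C" "y \<notin> T" "z \<notin> T"
    obtain n where n: "(y,z) \<in> E ^^ n" using reachC[OF a(1,2)] rtrancl_power by blast
    show "y = z \<or> (y,z) \<in> E"
      by (rule reach_adj[where T=T and T'=T' and n=n]) (use g clT clT' disj KT a(3,4) n in \<open>blast+\<close>)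
  qed
  have adjT': "\<And>y z. y \<in> C \<Longrightarrow> z \<in> C \<Longrightarrow> y \<notin> T' \<Longrightarrow> z \<notin> T' \<Longrightarrow> y = z \<or> (y,z) \<in> E"
  proof -
    fix y z assume a: "y \<in> C" "z \<in> C" "y \<notin> T'" "z \<notin> T'"
    obtain n where n: "(y,z) \<in> E ^^ n" using reachC[OF a(1,2)] rtrancl_power by blast
    show "y = z \<or> (y,z) \<in> E"
      by (rule reach_adj[where T=T' and T'=T and n=n]) (use g clT clT' disj' KT' a(3,4) n in \<open>blast+\<close>)
  qed
  define X where "X = C \<inter> T"
  define Y where "Y = C - T"
  have nbC: "\<And>x. x \<in> C \<Longrightarrow> closed_nbhd (induced_edges E C) x = closed_nbhd E x"
    using nbhd_induced[OF g] x0 by auto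
  have nbsubC: "\<And>x. x \<in> C \<Longrightarrow> closed_nbhd E x \<subseteq> C"
    using x0 gg unfolding closed_nbhd_def by (auto intro: rtrancl_into_rtrancl)
  have cX: "clique (induced_edges E C) X"
    unfolding clique_def induced_edges_def X_def using adjT' disj by blast
  have cY: "clique (induced_edges E C) Y"
    unfolding clique_def induced_edges_def Y_def using adjT by blast
  have nest: "\<And>x x'. x \<in> X \<Longrightarrow> x' \<in> X \<Longrightarrow> closed_nbhd E x \<subseteq> closed_nbhd E x' \<or> closed_nbhd E x' \<subseteq> closed_nbhd E x"
  proof (rule ccontr)
    fix x x' assume xx: "x \<in> X" "x' \<in> X"
      and n: "\<not> (closed_nbhd E x \<subseteq> closed_nbhd E x' \<or> closed_nbhd E x' \<subseteq> closed_nbhd E x)"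
    then obtain y y' where y: "y \<in> closed_nbhd E x" "y \<notin> closed_nbhd E x'"
      and y': "y' \<in> closed_nbhd E x'" "y' \<notin> closed_nbhd E x" by blast
    have xne: "x \<noteq> x'" using n by auto
    have xC: "x \<in> C" "x' \<in> C" using xx unfolding X_def by auto
    have xadj: "(x,x') \<in> E" using adjT'[OF xC] xx disj xne unfolding X_def by auto
    have "x \<in> closed_nbhd E x'" "x' \<in> closed_nbhd E x" using xadj gg unfolding closed_nbhd_def by auto
    then have yx: "y \<noteq> x" "y' \<noteq> x'" "y \<noteq> x'" "y' \<noteq> x" using y y' by (auto simp: closed_nbhd_def)
    have ye: "(x,y) \<in> E" "(x',y') \<in> E" using y y' yx unfolding closed_nbhd_def by auto
    have yC: "y \<in> C" "y' \<in> C" using nbsubC xC y(1) y'(1) by auto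
    have yT: "y \<notin> T"
    proof
      assume "y \<in> T"
      then have "y \<in> X" using yC unfolding X_def by auto
      then have "y = x' \<or> (y,x') \<in> E" using adjT'[OF yC(1) xC(2)] xx disj unfolding X_def by auto
      then show False using y(2) gg(5) unfolding closed_nbhd_def by auto
    qed
    have y'T: "y' \<notin> T"
    proof
      assume "y' \<in> T"
      then have "y' \<in> X" using yC unfolding X_def by auto
      then have "y' = x \<or> (y',x) \<in> E" using adjT'[OF yC(2) xC(1)] xx disj unfolding X_def by auto
      then show False using y'(2) gg(5) unfolding closed_nbhd_def by auto
    qed
    have "(y,x') \<notin> E" "(y',x) \<notin> E" using y(2) y'(2) gg(5) unfolding closed_nbhd_def by auto
    then show False using KT[of x x' y y'] xadj ye yx yT y'T by auto
  qed
  have finX: "finite X" using x0 gg unfolding X_def by auto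
  have finN: "\<And>x. x \<in> X \<Longrightarrow> finite (closed_nbhd E x)"
    using gg unfolding closed_nbhd_def by (auto intro: finite_subset)
  obtain xs where xs: "distinct xs" "set xs = X"
    "\<forall>i j. i < j \<and> j < length xs \<longrightarrow> closed_nbhd E (xs ! i) \<subseteq> closed_nbhd E (xs ! j)"
    using sorted_nested[where N="closed_nbhd E", OF finX finN nest] by blast
  have xs2: "\<forall>i j. i < j \<and> j < length xs \<longrightarrow>
      closed_nbhd (induced_edges E C) (xs ! i) \<subseteq> closed_nbhd (induced_edges E C) (xs ! j)"
  proof (intro allI impI)
    fix i j assume ij: "i < j \<and> j < length xs"
    then have "xs ! i \<in> C" "xs ! j \<in> C" using xs unfolding X_def by auto
    then show "closed_nbhd (induced_edges E C) (xs ! i) \<subseteq> closed_nbhd (induced_edges E C) (xs ! j)"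
      using nbC xs(3) ij by auto
  qed
  have "X \<union> Y = C" "X \<inter> Y = {}" unfolding X_def Y_def by auto
  then show "co_chain C (induced_edges E C)" unfolding co_chain_def using cX cY xs xs2 by blast
qed


locale po =
  fixes VG :: "'a set" and EG and VH :: "'b set" and EH and D
  assumes gG: "graph VG EG" and gH: "graph VH EH"
    and o: "one_perfect_orientation (VG \<times> VH) (spe VG EG VH EH) D"
begin

lemma Dsub: "(w,w') \<in> D \<Longrightarrow> (w,w') \<in> spe VG EG VH EH" using opoD(1)[OF o] by blast
lemma tot: "(w,w') \<in> spe VG EG VH EH \<Longrightarrow> (w,w') \<in> D \<or> (w',w) \<in> D" using opoD(2)[OF o] by blast
lemma anti: "(w,w') \<in> D \<Longrightarrow> (w',w) \<notin> D" using opoD(3)[OF o] by blast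
lemma clq: "(w,a) \<in> D \<Longrightarrow> (w,b) \<in> D \<Longrightarrow> a \<noteq> b \<Longrightarrow> (a,b) \<in> spe VG EG VH EH"
  using opoD(4)[OF o] Dsub spe_sub by blast
lemma step: "(b,a) \<in> D \<Longrightarrow> (b,c) \<in> spe VG EG VH EH \<Longrightarrow> (a,c) \<notin> spe VG EG VH EH \<Longrightarrow> a \<noteq> c \<Longrightarrow> (c,b) \<in> D"
  using tot clq by blast

definition Lset where "Lset i j = {g \<in> VG. \<exists>g''. ((g,j),(g'',i)) \<in> D}"

lemma Fl:
  assumes "(i,j) \<in> EH" "g \<in> VG" "g \<notin> Lset i j" "g' \<in> VG" "g' = g \<or> (g,g') \<in> EG"
  shows "((g',i),(g,j)) \<in> D"
proof -
  note h = graphD[OF gH] and gg = graphD[OF gG]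
  have "i \<in> VH" "j \<in> VH" "i \<noteq> j" using assms(1) h by auto
  then have "((g,j),(g',i)) \<in> spe VG EG VH EH" using assms h gg by (auto simp: spe_iff)
  then show ?thesis using tot assms(2,3) unfolding Lset_def by blast
qed

lemma clL:
  assumes "(i,j) \<in> EH" "g \<in> VG" "p \<in> closed_nbhd EG g" "q \<in> closed_nbhd EG g"
    "p \<notin> Lset i j" "q \<notin> Lset i j" "p \<noteq> q"
  shows "(p,q) \<in> EG"
proof -
  note gg = graphD[OF gG]
  have pV: "p \<in> VG" "q \<in> VG" using assms(2,3,4) gg unfolding closed_nbhd_def by auto
  have "((g,i),(p,j)) \<in> D" using Fl[OF assms(1) pV(1) assms(5) assms(2)] assms(3) gg unfolding closed_nbhd_def by auto
  moreover have "((g,i),(q,j)) \<in> D" using Fl[OF assms(1) pV(2) assms(6) assms(2)] assms(4) gg unfolding closed_nbhd_def by auto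
  ultimately have "((p,j),(q,j)) \<in> spe VG EG VH EH" using clq assms(7) by blast
  then show ?thesis using assms(7) by (auto simp: spe_iff)
qed

lemma disjL:
  assumes "(i,j) \<in> EH" "(k,j) \<in> EH" "i \<noteq> k" "(i,k) \<notin> EH"
  shows "Lset i j \<inter> Lset k j = {}"
proof (rule ccontr)
  assume "Lset i j \<inter> Lset k j \<noteq> {}"
  then obtain g g1 g2 where "((g,j),(g1,i)) \<in> D" "((g,j),(g2,k)) \<in> D" unfolding Lset_def by blast
  then have "((g1,i),(g2,k)) \<in> spe VG EG VH EH" using clq assms(3) by blast
  then show False using assms(3,4) by (auto simp: spe_iff)
qed

lemma KL:
  assumes "(i,j) \<in> EH" "(g1,g2) \<in> EG" "(g1,p) \<in> EG" "(g2,q) \<in> EG" "p \<noteq> g2" "(p,g2) \<notin> EG"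
    "q \<noteq> g1" "(q,g1) \<notin> EG" "p \<notin> Lset i j" "q \<notin> Lset i j"
  shows False
proof -
  note gg = graphD[OF gG] and h = graphD[OF gH]
  have V: "g1 \<in> VG" "g2 \<in> VG" "p \<in> VG" "q \<in> VG" "i \<in> VH" "j \<in> VH" "i \<noteq> j" using assms gg h by auto
  have a: "((g1,i),(p,j)) \<in> D" using Fl[OF assms(1) V(3) assms(9) V(1)] assms(3) gg by auto
  have b: "((g2,i),(q,j)) \<in> D" using Fl[OF assms(1) V(4) assms(10) V(2)] assms(4) gg by auto
  have "g1 \<noteq> g2" using assms(2) gg by auto
  then have e: "((g1,i),(g2,i)) \<in> spe VG EG VH EH" using V assms(2) by (auto simp: spe_iff)
  show False
  proof (cases "((g1,i),(g2,i)) \<in> D")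
    case True
    then have "((g2,i),(p,j)) \<in> spe VG EG VH EH" using clq a V(7) by blast
    then show False using assms(5,6) gg by (auto simp: spe_iff)
  next
    case False
    then have "((g2,i),(g1,i)) \<in> D" using tot e by blast
    then have "((g1,i),(q,j)) \<in> spe VG EG VH EH" using clq b V(7) by blast
    then show False using assms(7,8) gg by (auto simp: spe_iff)
  qed
qed

lemma L1:
  assumes "(v1,v2) \<in> EH" "(v2,v3) \<in> EH" "v1 \<noteq> v3" "(v1,v3) \<notin> EH"
  shows "\<forall>C\<in>components VG EG. co_chain C (induced_edges EG C)"
proof -
  note h = graphD[OF gH]
  have e3: "(v3,v2) \<in> EH" using assms(2) h by auto
  have d: "Lset v1 v2 \<inter> Lset v3 v2 = {}" using disjL[OF assms(1) e3 assms(3,4)] .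
  show ?thesis
  proof (rule cc_abs[OF gG, where T="Lset v1 v2" and T'="Lset v3 v2"])
    show "\<And>g p q. g \<in> VG \<Longrightarrow> p \<in> closed_nbhd EG g \<Longrightarrow> q \<in> closed_nbhd EG g \<Longrightarrow>
      p \<notin> Lset v1 v2 \<Longrightarrow> q \<notin> Lset v1 v2 \<Longrightarrow> p \<noteq> q \<Longrightarrow> (p, q) \<in> EG"
      using clL[OF assms(1)] by blast
    show "\<And>g p q. g \<in> VG \<Longrightarrow> p \<in> closed_nbhd EG g \<Longrightarrow> q \<in> closed_nbhd EG g \<Longrightarrow>
      p \<notin> Lset v3 v2 \<Longrightarrow> q \<notin> Lset v3 v2 \<Longrightarrow> p \<noteq> q \<Longrightarrow> (p, q) \<in> EG"
      using clL[OF e3] by blast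
    show "Lset v1 v2 \<inter> Lset v3 v2 = {}" by (rule d)
    show "\<And>g1 g2 p q. (g1, g2) \<in> EG \<Longrightarrow> (g1, p) \<in> EG \<Longrightarrow> (g2, q) \<in> EG \<Longrightarrow> p \<noteq> g2 \<Longrightarrow> (p, g2) \<notin> EG \<Longrightarrow>
      q \<noteq> g1 \<Longrightarrow> (q, g1) \<notin> EG \<Longrightarrow> p \<notin> Lset v1 v2 \<Longrightarrow> q \<notin> Lset v1 v2 \<Longrightarrow> False"
      using KL[OF assms(1)] by blast
    show "\<And>g1 g2 p q. (g1, g2) \<in> EG \<Longrightarrow> (g1, p) \<in> EG \<Longrightarrow> (g2, q) \<in> EG \<Longrightarrow> p \<noteq> g2 \<Longrightarrow> (p, g2) \<notin> EG \<Longrightarrow>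
      q \<noteq> g1 \<Longrightarrow> (q, g1) \<notin> EG \<Longrightarrow> p \<notin> Lset v3 v2 \<Longrightarrow> q \<notin> Lset v3 v2 \<Longrightarrow> False"
      using KL[OF e3] by blast
  qed
qed

lemma restrict:
  assumes "g0 \<in> VG"
  shows "one_perfectly_orientable VH EH"
proof -
  define DH where "DH = {(h,h'). ((g0,h),(g0,h')) \<in> D}"
  have "one_perfect_orientation VH EH DH"
    unfolding one_perfect_orientation_def orientation_def
  proof (intro conjI allI impI ballI)
    show "DH \<subseteq> EH"
    proof
      fix x assume "x \<in> DH"
      then obtain u v where x: "x = (u,v)" "((g0,u),(g0,v)) \<in> D" unfolding DH_def by blast
      then have "((g0,u),(g0,v)) \<in> spe VG EG VH EH" using Dsub by blast
      then show "x \<in> EH" unfolding x spe_iff by auto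
    qed
    fix u v
    show "(u, v) \<in> EH \<Longrightarrow> (u, v) \<in> DH \<or> (v, u) \<in> DH"
    proof -
      assume uv: "(u,v) \<in> EH"
      then have "u \<in> VH" "v \<in> VH" "u \<noteq> v" using graphD[OF gH] by auto
      then have "((g0,u),(g0,v)) \<in> spe VG EG VH EH" using uv assms by (simp add: spe_iff)
      then show ?thesis using tot unfolding DH_def by blast
    qed
    show "(u, v) \<in> DH \<Longrightarrow> (v, u) \<notin> DH" unfolding DH_def using anti by auto
  next
    fix v assume "v \<in> VH"
    show "clique EH {w. (v, w) \<in> DH}"
      unfolding clique_def
    proof (intro ballI impI)
      fix x y assume "x \<in> {w. (v, w) \<in> DH}" "y \<in> {w. (v, w) \<in> DH}" "x \<noteq> y"
      then have "((g0,x),(g0,y)) \<in> spe VG EG VH EH" using clq unfolding DH_def by auto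
      then show "(x,y) \<in> EH" using \<open>x \<noteq> y\<close> unfolding spe_iff by auto
    qed
  qed
  then show ?thesis unfolding one_perfectly_orientable_def by blast
qed

lemma P4P4:
  assumes ga: "(a,b) \<in> EG" "(b,c) \<in> EG" "(c,d) \<in> EG" "(a,c) \<notin> EG" "(b,d) \<notin> EG" "(a,d) \<notin> EG"
      "a \<noteq> c" "b \<noteq> d" "a \<noteq> d"
    and ha: "(h1,h2) \<in> EH" "(h2,h3) \<in> EH" "(h3,h4) \<in> EH" "(h1,h3) \<notin> EH" "(h2,h4) \<notin> EH" "(h1,h4) \<notin> EH"
      "h1 \<noteq> h3" "h2 \<noteq> h4" "h1 \<noteq> h4"
  shows False
proof -
  note gg = graphD[OF gG] and hh = graphD[OF gH]
  have gs: "(b,a) \<in> EG" "(c,b) \<in> EG" "(d,c) \<in> EG" "(c,a) \<notin> EG" "(d,b) \<notin> EG" "(d,a) \<notin> EG"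
    "a \<noteq> b" "b \<noteq> c" "c \<noteq> d" "b \<noteq> a" "c \<noteq> b" "d \<noteq> c" "c \<noteq> a" "d \<noteq> b" "d \<noteq> a"
    "a \<in> VG" "b \<in> VG" "c \<in> VG" "d \<in> VG"
    using ga gg by (auto dest: symD)
  have hs: "(h2,h1) \<in> EH" "(h3,h2) \<in> EH" "(h4,h3) \<in> EH" "(h3,h1) \<notin> EH" "(h4,h2) \<notin> EH" "(h4,h1) \<notin> EH"
    "h1 \<noteq> h2" "h2 \<noteq> h3" "h3 \<noteq> h4" "h2 \<noteq> h1" "h3 \<noteq> h2" "h4 \<noteq> h3" "h3 \<noteq> h1" "h4 \<noteq> h2" "h4 \<noteq> h1"
    "h1 \<in> VH" "h2 \<in> VH" "h3 \<in> VH" "h4 \<in> VH"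
    using ha hh by (auto dest: symD)
  note F = ga gs ha hs spe_iff
  have chain1: "((a,h2),(b,h1)) \<in> D \<Longrightarrow> ((b,h1),(a,h2)) \<in> D"
  proof -
    assume s0: "((a,h2),(b,h1)) \<in> D"
    have s1: "((b,h3),(a,h2)) \<in> D" by (rule step[OF s0]) (simp_all add: F)
    have s2: "((c,h2),(b,h3)) \<in> D" by (rule step[OF s1]) (simp_all add: F)
    have s3: "((d,h3),(c,h2)) \<in> D" by (rule step[OF s2]) (simp_all add: F)
    have s4: "((c,h4),(d,h3)) \<in> D" by (rule step[OF s3]) (simp_all add: F)
    have s5: "((b,h3),(c,h4)) \<in> D" by (rule step[OF s4]) (simp_all add: F)
    have s6: "((a,h2),(b,h3)) \<in> D" by (rule step[OF s5]) (simp_all add: F)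
    show "((b,h1),(a,h2)) \<in> D" by (rule step[OF s6]) (simp_all add: F)
  qed
  have chain2: "((b,h1),(a,h2)) \<in> D \<Longrightarrow> ((a,h2),(b,h1)) \<in> D"
  proof -
    assume s0: "((b,h1),(a,h2)) \<in> D"
    have s1: "((c,h2),(b,h1)) \<in> D" by (rule step[OF s0]) (simp_all add: F)
    have s2: "((b,h3),(c,h2)) \<in> D" by (rule step[OF s1]) (simp_all add: F)
    have s3: "((c,h4),(b,h3)) \<in> D" by (rule step[OF s2]) (simp_all add: F)
    have s4: "((d,h3),(c,h4)) \<in> D" by (rule step[OF s3]) (simp_all add: F)
    have s5: "((c,h2),(d,h3)) \<in> D" by (rule step[OF s4]) (simp_all add: F)
    have s6: "((b,h1),(c,h2)) \<in> D" by (rule step[OF s5]) (simp_all add: F)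
    show "((a,h2),(b,h1)) \<in> D" by (rule step[OF s6]) (simp_all add: F)
  qed
  have "((a,h2),(b,h1)) \<in> spe VG EG VH EH" by (simp add: F)
  then show False using tot chain1 chain2 anti by blast
qed

end


lemma comp_reach:
  assumes g: "graph V E" and C: "C \<in> components V E"
  obtains x0 where "x0 \<in> V" "C = {y \<in> V. (x0, y) \<in> E\<^sup>*}"
    "\<And>y z. y \<in> C \<Longrightarrow> z \<in> C \<Longrightarrow> (y,z) \<in> E\<^sup>*"
proof -
  obtain x0 where x0: "x0 \<in> V" "C = {y \<in> V. (x0, y) \<in> E\<^sup>*}" using C unfolding components_def by blast
  have "\<And>y z. y \<in> C \<Longrightarrow> z \<in> C \<Longrightarrow> (y,z) \<in> E\<^sup>*"
    using x0 rtrancl_sym[OF graphD(3)[OF g]] by (auto intro: rtrancl_trans)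
  then show ?thesis using that x0 by blast
qed

lemma noncomplete_P3:
  assumes g: "graph V E" and C: "C \<in> components V E" and nc: "\<not> complete_graph C (induced_edges E C)"
  shows "\<exists>x y z. (x,y) \<in> E \<and> (y,z) \<in> E \<and> x \<noteq> z \<and> (x,z) \<notin> E"
proof (rule ccontr)
  assume nP: "\<not> ?thesis"
  obtain x0 where x0: "x0 \<in> V" "C = {y \<in> V. (x0, y) \<in> E\<^sup>*}" and rc: "\<And>y z. y \<in> C \<Longrightarrow> z \<in> C \<Longrightarrow> (y,z) \<in> E\<^sup>*"
    using comp_reach[OF g C] by blast
  obtain u w where uw: "u \<in> C" "w \<in> C" "u \<noteq> w" "(u,w) \<notin> E"
    using nc unfolding complete_graph_def clique_def induced_edges_def by blast
  have "\<And>w. (u,w) \<in> E\<^sup>* \<Longrightarrow> w = u \<or> (u,w) \<in> E"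
  proof -
    fix w assume "(u,w) \<in> E\<^sup>*"
    then show "w = u \<or> (u,w) \<in> E"
    proof (induction rule: rtrancl_induct)
      case base then show ?case by simp
    next
      case (step y z)
      then show ?case using nP by blast
    qed
  qed
  then show False using rc[OF uw(1,2)] uw(3,4) by blast
qed

lemma noncomplete2_P4:
  assumes g: "graph V E" and C: "C \<in> components V E" and cc: "co_chain C (induced_edges E C)"
    and n2: "\<not> two_complete C (induced_edges E C)"
  shows "\<exists>a b c d. (a,b) \<in> E \<and> (b,c) \<in> E \<and> (c,d) \<in> E \<and> (a,c) \<notin> E \<and> (b,d) \<notin> E \<and> (a,d) \<notin> E
      \<and> a \<noteq> c \<and> b \<noteq> d \<and> a \<noteq> d"
proof (rule ccontr)
  assume nP: "\<not> ?thesis"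
  note gg = graphD[OF g]
  obtain x0 where x0: "x0 \<in> V" "C = {y \<in> V. (x0, y) \<in> E\<^sup>*}" and rc: "\<And>y z. y \<in> C \<Longrightarrow> z \<in> C \<Longrightarrow> (y,z) \<in> E\<^sup>*"
    using comp_reach[OF g C] by blast
  obtain X Y xs where XY: "X \<union> Y = C" "X \<inter> Y = {}" "clique (induced_edges E C) X" "clique (induced_edges E C) Y"
    "distinct xs" "set xs = X"
    "\<forall>i j. i < j \<and> j < length xs \<longrightarrow> closed_nbhd (induced_edges E C) (xs ! i) \<subseteq> closed_nbhd (induced_edges E C) (xs ! j)"
    using cc unfolding co_chain_def by blast
  have cX: "\<And>p q. p \<in> X \<Longrightarrow> q \<in> X \<Longrightarrow> p \<noteq> q \<Longrightarrow> (p,q) \<in> E"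
    using XY(3) unfolding clique_def induced_edges_def by blast
  have cY: "\<And>p q. p \<in> Y \<Longrightarrow> q \<in> Y \<Longrightarrow> p \<noteq> q \<Longrightarrow> (p,q) \<in> E"
    using XY(4) unfolding clique_def induced_edges_def by blast
  have nbC: "\<And>x. x \<in> C \<Longrightarrow> closed_nbhd (induced_edges E C) x = closed_nbhd E x"
    using nbhd_induced[OF g] x0 by auto
  have nest: "\<And>x x'. x \<in> X \<Longrightarrow> x' \<in> X \<Longrightarrow> closed_nbhd E x \<subseteq> closed_nbhd E x' \<or> closed_nbhd E x' \<subseteq> closed_nbhd E x"
  proof -
    fix x x' assume m: "x \<in> X" "x' \<in> X"
    obtain i j where ij: "i < length xs" "xs ! i = x" "j < length xs" "xs ! j = x'"
      using m XY(6) by (metis in_set_conv_nth)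
    have "x \<in> C" "x' \<in> C" using m XY(1) by auto
    then have nb: "closed_nbhd (induced_edges E C) x = closed_nbhd E x"
        "closed_nbhd (induced_edges E C) x' = closed_nbhd E x'" using nbC by auto
    have "i < j \<or> j < i \<or> i = j" by arith
    then show "closed_nbhd E x \<subseteq> closed_nbhd E x' \<or> closed_nbhd E x' \<subseteq> closed_nbhd E x"
      using XY(7) ij nb by (metis order_refl)
  qed
  have key: "\<And>u v. u \<in> X \<Longrightarrow> v \<in> Y \<Longrightarrow> (u,v) \<in> E \<Longrightarrow> (\<forall>x\<in>X. (v,x) \<in> E) \<or> (\<forall>y\<in>Y. (u,y) \<in> E)"
  proof (rule ccontr)
    fix u v assume uv: "u \<in> X" "v \<in> Y" "(u,v) \<in> E" and n: "\<not> ((\<forall>x\<in>X. (v,x) \<in> E) \<or> (\<forall>y\<in>Y. (u,y) \<in> E))"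
    then obtain x' y' where x': "x' \<in> X" "(v,x') \<notin> E" and y': "y' \<in> Y" "(u,y') \<notin> E" by blast
    have d: "y' \<noteq> u" "v \<noteq> x'" "y' \<noteq> x'" "y' \<noteq> v" "u \<noteq> x'" using uv x' y' XY(2) gg by auto
    have e1: "(y',v) \<in> E" using cY y'(1) uv(2) d(4) by blast
    have e2: "(v,u) \<in> E" using uv gg by auto
    have e3: "(u,x') \<in> E" using cX uv(1) x'(1) d(5) by blast
    have "\<not> closed_nbhd E u \<subseteq> closed_nbhd E x'"
    proof
      assume "closed_nbhd E u \<subseteq> closed_nbhd E x'"
      moreover have "v \<in> closed_nbhd E u" using uv unfolding closed_nbhd_def by auto
      ultimately have "v \<in> closed_nbhd E x'" by blast
      then show False using d x' gg unfolding closed_nbhd_def by auto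
    qed
    then have sub: "closed_nbhd E x' \<subseteq> closed_nbhd E u" using nest uv(1) x'(1) by blast
    have ne: "(y',x') \<notin> E"
    proof
      assume "(y',x') \<in> E"
      then have "y' \<in> closed_nbhd E x'" using gg unfolding closed_nbhd_def by auto
      then have "y' \<in> closed_nbhd E u" using sub by blast
      then show False using d y' unfolding closed_nbhd_def by auto
    qed
    have "(y',u) \<notin> E" using y' gg by auto
    then show False using nP e1 e2 e3 x'(2) ne d by blast
  qed
  define A where "A = X \<union> {y\<in>Y. \<forall>x\<in>X. (y,x) \<in> E}"
  define B where "B = Y \<union> {x\<in>X. \<forall>y\<in>Y. (x,y) \<in> E}"
  have AB: "A \<union> B = C" using XY(1) unfolding A_def B_def by auto
  have ABne: "A \<inter> B \<noteq> {}"
  proof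
    assume emp: "A \<inter> B = {}"
    have nx: "\<And>x. x \<in> X \<Longrightarrow> \<exists>y\<in>Y. (x,y) \<notin> E" using emp unfolding A_def B_def by blast
    have ny: "\<And>y. y \<in> Y \<Longrightarrow> \<exists>x\<in>X. (y,x) \<notin> E" using emp unfolding A_def B_def by blast
    have noedge: "\<And>u v. u \<in> X \<Longrightarrow> v \<in> Y \<Longrightarrow> (u,v) \<notin> E"
      using key nx ny by blast
    have x0C: "x0 \<in> C" using x0 by auto
    have side: "\<And>z. (x0,z) \<in> E\<^sup>* \<Longrightarrow> (z \<in> X \<longleftrightarrow> x0 \<in> X) \<and> z \<in> C"
    proof -
      fix z assume "(x0,z) \<in> E\<^sup>*"
      then show "(z \<in> X \<longleftrightarrow> x0 \<in> X) \<and> z \<in> C"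
      proof (induction rule: rtrancl_induct)
        case base then show ?case using x0C by simp
      next
        case (step y z)
        have zC: "z \<in> C" using step x0 gg by (auto intro: rtrancl_into_rtrancl)
        have "y \<in> X \<longleftrightarrow> z \<in> X"
        proof
          assume "y \<in> X"
          moreover have "z \<in> X \<or> z \<in> Y" using zC XY(1) by auto
          ultimately show "z \<in> X" using noedge step(2) by blast
        next
          assume "z \<in> X"
          moreover have "y \<in> X \<or> y \<in> Y" using step(3) XY(1) by auto
          moreover have "(z,y) \<in> E" using step(2) gg by auto
          ultimately show "y \<in> X" using noedge by blast
        qed
        then show ?case using step zC by blast
      qed
    qed
    show False
    proof (cases "x0 \<in> X")
      case True
      then have "\<And>y. y \<in> Y \<Longrightarrow> False" using side XY x0 by blast
      then have "Y = {}" by blast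
      then show False using nx True by blast
    next
      case False
      then have x0Y: "x0 \<in> Y" using x0C XY(1) by auto
      have "\<And>x. x \<in> X \<Longrightarrow> False" using side XY x0 False by blast
      then have "X = {}" by blast
      then show False using ny x0Y by blast
    qed
  qed
  have edge: "\<forall>p q. (p, q) \<in> induced_edges E C \<longleftrightarrow> p \<noteq> q \<and> ((p \<in> A \<and> q \<in> A) \<or> (p \<in> B \<and> q \<in> B))"
  proof (intro allI iffI)
    fix p q assume pq: "(p,q) \<in> induced_edges E C"
    then have pqE: "(p,q) \<in> E" "p \<in> C" "q \<in> C" unfolding induced_edges_def by auto
    have ne: "p \<noteq> q" using pqE gg by auto
    have pXY: "p \<in> X \<or> p \<in> Y" "q \<in> X \<or> q \<in> Y" using pqE XY(1) by auto
    have "(p \<in> A \<and> q \<in> A) \<or> (p \<in> B \<and> q \<in> B)"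
    proof (cases "p \<in> X")
      case pX: True
      show ?thesis
      proof (cases "q \<in> X")
        case True then show ?thesis using pX unfolding A_def by auto
      next
        case False
        then have "q \<in> Y" using pXY by auto
        then show ?thesis using key[OF pX _ pqE(1)] pX XY(2) unfolding A_def B_def by blast
      qed
    next
      case pnX: False
      then have pY: "p \<in> Y" using pXY by auto
      show ?thesis
      proof (cases "q \<in> X")
        case qX: True
        have "(q,p) \<in> E" using pqE gg by auto
        then show ?thesis using key[OF qX pY] qX pY XY(2) unfolding A_def B_def by blast
      next
        case False
        then have "q \<in> Y" using pXY by auto
        then show ?thesis using pY unfolding B_def by auto
      qed
    qed
    then show "p \<noteq> q \<and> ((p \<in> A \<and> q \<in> A) \<or> (p \<in> B \<and> q \<in> B))" using ne by blast
  next
    fix p q assume pq: "p \<noteq> q \<and> ((p \<in> A \<and> q \<in> A) \<or> (p \<in> B \<and> q \<in> B))"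
    have inC: "p \<in> C" "q \<in> C" using pq AB by auto
    have "(p,q) \<in> E"
    proof (cases "p \<in> A \<and> q \<in> A")
      case True
      then show ?thesis using pq cX cY gg(5) unfolding A_def by blast
    next
      case False
      then have "p \<in> B" "q \<in> B" using pq by auto
      then show ?thesis using pq cX cY gg(5) unfolding B_def by blast
    qed
    then show "(p,q) \<in> induced_edges E C" using inC unfolding induced_edges_def by auto
  qed
  have "two_complete C (induced_edges E C)" unfolding two_complete_def using AB ABne edge by blast
  then show False using n2 by blast
qed


theorem theorem22:
  fixes VG :: "'a set" and EG :: "('a \<times> 'a) set"
    and VH :: "'b set" and EH :: "('b \<times> 'b) set"
  assumes "graph VG EG" and "graph VH EH"
    and "card VG \<ge> 2" and "card VH \<ge> 2"
  shows "one_perfectly_orientable (VG \<times> VH) (strong_product_edges VG EG VH EH) \<longleftrightarrow>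
    ((\<forall>C\<in>components VG EG. complete_graph C (induced_edges EG C)) \<and> one_perfectly_orientable VH EH)
    \<or> ((\<forall>C\<in>components VH EH. complete_graph C (induced_edges EH C)) \<and> one_perfectly_orientable VG EG)
    \<or> ((\<forall>C\<in>components VG EG. two_complete C (induced_edges EG C)) \<and>
       (\<forall>C\<in>components VH EH. co_chain C (induced_edges EH C)))
    \<or> ((\<forall>C\<in>components VH EH. two_complete C (induced_edges EH C)) \<and>
       (\<forall>C\<in>components VG EG. co_chain C (induced_edges EG C)))"
proof
  assume opo: "one_perfectly_orientable (VG \<times> VH) (strong_product_edges VG EG VH EH)"
  then obtain D where D: "one_perfect_orientation (VG \<times> VH) (spe VG EG VH EH) D"
    unfolding one_perfectly_orientable_def by blast
  interpret P: po VG EG VH EH D using assms(1,2) D by unfold_locales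
  interpret Q: po VH EH VG EG "{(w,w'). (prod.swap w, prod.swap w') \<in> D}"
    using assms(1,2) opo_swap_D[OF D] by unfold_locales
  obtain g0 where g0: "g0 \<in> VG" using assms(3) by (metis card.empty ex_in_conv not_numeral_le_zero)
  obtain h0 where h0: "h0 \<in> VH" using assms(4) by (metis card.empty ex_in_conv not_numeral_le_zero)
  have oH: "one_perfectly_orientable VH EH" using P.restrict[OF g0] .
  have oG: "one_perfectly_orientable VG EG" using Q.restrict[OF h0] .
  show "((\<forall>C\<in>components VG EG. complete_graph C (induced_edges EG C)) \<and> one_perfectly_orientable VH EH)
    \<or> ((\<forall>C\<in>components VH EH. complete_graph C (induced_edges EH C)) \<and> one_perfectly_orientable VG EG)
    \<or> ((\<forall>C\<in>components VG EG. two_complete C (induced_edges EG C)) \<and>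
       (\<forall>C\<in>components VH EH. co_chain C (induced_edges EH C)))
    \<or> ((\<forall>C\<in>components VH EH. two_complete C (induced_edges EH C)) \<and>
       (\<forall>C\<in>components VG EG. co_chain C (induced_edges EG C)))"
  proof (cases "\<forall>C\<in>components VG EG. complete_graph C (induced_edges EG C)")
    case True then show ?thesis using oH by blast
  next
    case nG: False
    show ?thesis
    proof (cases "\<forall>C\<in>components VH EH. complete_graph C (induced_edges EH C)")
      case True then show ?thesis using oG by blast
    next
      case nH: False
      obtain x y z where p3G: "(x,y) \<in> EG" "(y,z) \<in> EG" "x \<noteq> z" "(x,z) \<notin> EG"
        using nG noncomplete_P3[OF assms(1)] by blast
      obtain u v w where p3H: "(u,v) \<in> EH" "(v,w) \<in> EH" "u \<noteq> w" "(u,w) \<notin> EH"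
        using nH noncomplete_P3[OF assms(2)] by blast
      have ccG: "\<forall>C\<in>components VG EG. co_chain C (induced_edges EG C)" using P.L1[OF p3H] .
      have ccH: "\<forall>C\<in>components VH EH. co_chain C (induced_edges EH C)" using Q.L1[OF p3G] .
      show ?thesis
      proof (cases "\<forall>C\<in>components VG EG. two_complete C (induced_edges EG C)")
        case True then show ?thesis using ccH by blast
      next
        case n2G: False
        show ?thesis
        proof (cases "\<forall>C\<in>components VH EH. two_complete C (induced_edges EH C)")
          case True then show ?thesis using ccG by blast
        next
          case n2H: False
          obtain C1 where C1: "C1 \<in> components VG EG" "\<not> two_complete C1 (induced_edges EG C1)" using n2G by blast
          obtain C2 where C2: "C2 \<in> components VH EH" "\<not> two_complete C2 (induced_edges EH C2)" using n2H by blast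
          obtain a b c d where p4G: "(a,b) \<in> EG" "(b,c) \<in> EG" "(c,d) \<in> EG" "(a,c) \<notin> EG" "(b,d) \<notin> EG" "(a,d) \<notin> EG"
            "a \<noteq> c" "b \<noteq> d" "a \<noteq> d"
            using noncomplete2_P4[OF assms(1) C1(1) _ C1(2)] ccG C1(1) by blast
          obtain h1 h2 h3 h4 where p4H: "(h1,h2) \<in> EH" "(h2,h3) \<in> EH" "(h3,h4) \<in> EH" "(h1,h3) \<notin> EH" "(h2,h4) \<notin> EH" "(h1,h4) \<notin> EH"
            "h1 \<noteq> h3" "h2 \<noteq> h4" "h1 \<noteq> h4"
            using noncomplete2_P4[OF assms(2) C2(1) _ C2(2)] ccH C2(1) by blast
          show ?thesis using P.P4P4[OF p4G p4H] by blast
        qed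
      qed
    qed
  qed
next
  assume "((\<forall>C\<in>components VG EG. complete_graph C (induced_edges EG C)) \<and> one_perfectly_orientable VH EH)
    \<or> ((\<forall>C\<in>components VH EH. complete_graph C (induced_edges EH C)) \<and> one_perfectly_orientable VG EG)
    \<or> ((\<forall>C\<in>components VG EG. two_complete C (induced_edges EG C)) \<and>
       (\<forall>C\<in>components VH EH. co_chain C (induced_edges EH C)))
    \<or> ((\<forall>C\<in>components VH EH. two_complete C (induced_edges EH C)) \<and>
       (\<forall>C\<in>components VG EG. co_chain C (induced_edges EG C)))"
  then show "one_perfectly_orientable (VG \<times> VH) (strong_product_edges VG EG VH EH)"
  proof (elim disjE conjE)
    assume "\<forall>C\<in>components VG EG. complete_graph C (induced_edges EG C)" "one_perfectly_orientable VH EH"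
    then show ?thesis using back_i[OF assms(1,2)] by blast
  next
    assume "\<forall>C\<in>components VH EH. complete_graph C (induced_edges EH C)" "one_perfectly_orientable VG EG"
    then have "one_perfectly_orientable (VH \<times> VG) (spe VH EH VG EG)" using back_i[OF assms(2,1)] by blast
    then show ?thesis by (rule opo_swap)
  next
    assume "\<forall>C\<in>components VG EG. two_complete C (induced_edges EG C)"
      "\<forall>C\<in>components VH EH. co_chain C (induced_edges EH C)"
    then show ?thesis using back_ii[OF assms(1,2)] by blast
  next
    assume "\<forall>C\<in>components VH EH. two_complete C (induced_edges EH C)"
      "\<forall>C\<in>components VG EG. co_chain C (induced_edges EG C)"
    then have "one_perfectly_orientable (VH \<times> VG) (spe VH EH VG EG)" using back_ii[OF assms(2,1)] by blast
    then show ?thesis by (rule opo_swap)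
  qed
qed

end
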